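(* Let $\alpha\in(0,2)$ and let $\omega$ be a positive continuous function on $\mathbb R^d$ with $\lim_{|x|\to\infty}\omega(x)=\infty$. Suppose there is $C_0>0$ such that $$\int\big(f(x)-\mu_V(f)\big)^2\omega(x)\,\mu_V(dx)\le C_0D_{\alpha,V}(f,f)\quad\text{for all } f\in C_b^\infty(\mathbb R^d).$$ Then there is a constant $C_1>0$ such that the super Poincaré inequality $$\mu_V(f^2)\le rD_{\alpha,V}(f,f)+\beta(r)\mu_V(|f|)^2,\qquad r>0,\ f\in C_b^\infty(\mathbb R^d)$$ holds with $$\beta(r)=\inf\Big\{C_1H(t)^{2+d/\alpha}h(t)^{-1-d/\alpha}\big(1+s^{-d/\alpha}\big):\ \frac{2C_0}{\inf_{|x|\ge t}\omega(x)}+s\le r,\ t>1,\ s>0\Big\}.$$ In particular, there are $r_0>0$ and $C_2>0$ such that for all $0<r\le r_0$, $$\beta(r)\le C_2\Big(1+r^{-d/\alpha}\big(h(\kappa(4C_0r^{-1}))\big)^{-1-d/\alpha}\big(H(\kappa(4C_0r^{-1}))\big)^{2+d/\alpha}\Big).$$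
   Context: Let $d\ge1$. $V:\mathbb R^d\to\mathbb R$ is a locally bounded measurable function such that $e^{-V}$ is bounded and $\int e^{-V(x)}dx<\infty$; $\mu_V(dx)=\frac{e^{-V(x)}}{\int e^{-V(y)}dy}dx$, and $\mu_V(f)=\int f\,d\mu_V$. $C_b^\infty(\mathbb R^d)$ is the set of smooth functions on $\mathbb R^d$ that are bounded together with all their derivatives. $D_{\alpha,V}(f,f):=\iint\frac{(f(y)-f(x))^2}{|y-x|^{d+\alpha}}\,dy\,\mu_V(dx)$. For $r>0$: $h(r):=\inf_{|x|\le r}e^{V(x)}$, $H(r):=\sup_{|x|\le r}e^{V(x)}$, and $\kappa(r):=\inf\{s>0:\ \inf_{|x|\ge s}\omega(x)\ge r\}$. *)

theory Defs
  imports "HOL-Analysis.Analysis"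
begin

text \<open>R^d is modelled by an arbitrary Euclidean space type 'a, with d = DIM('a) \<ge> 1.\<close>

text \<open>C_b^\<infinity>: smooth functions bounded together with all their (iterated partial) derivatives.\<close>
coinductive Cb_inf :: "('a::euclidean_space \<Rightarrow> real) \<Rightarrow> bool" where
  "bounded (range f) \<Longrightarrow> (\<And>x. (f has_derivative f' x) (at x))
   \<Longrightarrow> (\<And>i. i \<in> Basis \<Longrightarrow> Cb_inf (\<lambda>x. f' x i)) \<Longrightarrow> Cb_inf f"

definition ZV :: "('a::euclidean_space \<Rightarrow> real) \<Rightarrow> real" where
  "ZV V = (\<integral>y. exp (- V y) \<partial>lborel)"

definition muV :: "('a::euclidean_space \<Rightarrow> real) \<Rightarrow> 'a measure" where
  "muV V = density lborel (\<lambda>x. ennreal (exp (- V x) / ZV V))"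

definition muV_int :: "('a::euclidean_space \<Rightarrow> real) \<Rightarrow> ('a \<Rightarrow> real) \<Rightarrow> real" where
  "muV_int V f = (\<integral>x. f x \<partial>muV V)"

definition DaV :: "real \<Rightarrow> ('a::euclidean_space \<Rightarrow> real) \<Rightarrow> ('a \<Rightarrow> real) \<Rightarrow> real" where
  "DaV \<alpha> V f = (\<integral>x. (\<integral>y. (f y - f x)\<^sup>2 / norm (y - x) powr (real DIM('a) + \<alpha>) \<partial>lborel) \<partial>muV V)"

definition hV :: "('a::euclidean_space \<Rightarrow> real) \<Rightarrow> real \<Rightarrow> real" where
  "hV V r = (INF x\<in>cball 0 r. exp (V x))"

definition HV :: "('a::euclidean_space \<Rightarrow> real) \<Rightarrow> real \<Rightarrow> real" where
  "HV V r = (SUP x\<in>cball 0 r. exp (V x))"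

definition omega_inf :: "('a::euclidean_space \<Rightarrow> real) \<Rightarrow> real \<Rightarrow> real" where
  "omega_inf \<omega> t = (INF x\<in>{x. norm x \<ge> t}. \<omega> x)"

definition kappa :: "('a::euclidean_space \<Rightarrow> real) \<Rightarrow> real \<Rightarrow> real" where
  "kappa \<omega> r = Inf {s. s > 0 \<and> omega_inf \<omega> s \<ge> r}"

definition beta_fun :: "real \<Rightarrow> ('a::euclidean_space \<Rightarrow> real) \<Rightarrow> ('a \<Rightarrow> real) \<Rightarrow> real \<Rightarrow> real \<Rightarrow> real \<Rightarrow> real" where
  "beta_fun \<alpha> V \<omega> C0 C1 r = Inf {C1 * HV V t powr (2 + real DIM('a) / \<alpha>) * hV V t powr (-1 - real DIM('a) / \<alpha>)
          * (1 + s powr (- real DIM('a) / \<alpha>)) | t s.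
       2 * C0 / omega_inf \<omega> t + s \<le> r \<and> t > 1 \<and> s > 0}"

end

theory Submission
  imports Defs
begin


lemma Cb_inf_props:
  fixes f :: "'a::euclidean_space \<Rightarrow> real"
  assumes "Cb_inf f"
  shows "\<exists>M L. M \<ge> 0 \<and> L \<ge> 0 \<and> (\<forall>x. \<bar>f x\<bar> \<le> M) \<and> (\<forall>x y. \<bar>f x - f y\<bar> \<le> L * norm (x - y))
     \<and> continuous_on UNIV f"
proof -
  from assms obtain f' where bf: "bounded (range f)" and der: "\<And>x. (f has_derivative f' x) (at x)"
    and cb: "\<And>i. i \<in> Basis \<Longrightarrow> Cb_inf (\<lambda>x. f' x i)"
    by (cases rule: Cb_inf.cases) auto
  have "\<forall>i\<in>Basis. \<exists>B. \<forall>x. \<bar>f' x i\<bar> \<le> B"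
  proof
    fix i :: 'a assume "i \<in> Basis"
    from cb[OF this] have "bounded (range (\<lambda>x. f' x i))" by (cases rule: Cb_inf.cases) auto
    then show "\<exists>B. \<forall>x. \<bar>f' x i\<bar> \<le> B" by (auto simp: bounded_iff)
  qed
  then obtain B where B: "\<And>i x. i \<in> Basis \<Longrightarrow> \<bar>f' x i\<bar> \<le> B i" by metis
  define L where "L = (\<Sum>i\<in>Basis. \<bar>B i\<bar>)"
  have L0: "L \<ge> 0" unfolding L_def by (simp add: sum_nonneg)
  have on: "onorm (f' x) \<le> L" for x
  proof (rule onorm_le)
    fix v :: 'a
    have lin: "linear (f' x)" using der[of x] by (simp add: has_derivative_def bounded_linear.linear)
    have "f' x v = f' x (\<Sum>i\<in>Basis. (v \<bullet> i) *\<^sub>R i)" by (simp add: euclidean_representation)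
    also have "\<dots> = (\<Sum>i\<in>Basis. (v \<bullet> i) * f' x i)"
      by (simp add: linear_sum[OF lin] linear_scale[OF lin])
    finally have "\<bar>f' x v\<bar> \<le> (\<Sum>i\<in>Basis. \<bar>v \<bullet> i\<bar> * \<bar>f' x i\<bar>)"
      by (metis (no_types, lifting) abs_mult sum_abs sum.cong)
    also have "\<dots> \<le> (\<Sum>i\<in>Basis. norm v * \<bar>B i\<bar>)"
      apply (rule sum_mono)
      apply (rule mult_mono)
      using Basis_le_norm apply blast
      apply (meson B abs_ge_self order_trans)
      by simp_all
    also have "\<dots> = L * norm v" by (simp add: L_def sum_distrib_left mult.commute)
    finally show "norm (f' x v) \<le> L * norm v" by simp
  qed
  have lip: "\<bar>f x - f y\<bar> \<le> L * norm (x - y)" for x y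
    using differentiable_bound[of UNIV f f' L x y] der on by simp
  from bf obtain M where M: "\<And>x. \<bar>f x\<bar> \<le> M" by (auto simp: bounded_iff)
  have M0: "M \<ge> 0" using M[of 0] by simp
  have "continuous_on UNIV f"
    using der by (meson continuous_at_imp_continuous_on has_derivative_continuous)
  with lip M M0 L0 show ?thesis by blast
qed



locale VS =
  fixes V :: "'a::euclidean_space \<Rightarrow> real"
  assumes V_meas[measurable]: "V \<in> borel_measurable borel"
    and V_locbdd: "\<And>K. compact K \<Longrightarrow> bounded (V ` K)"
    and expV_bdd: "bounded (range (\<lambda>x. exp (- V x)))"
    and expV_int: "integrable lborel (\<lambda>x. exp (- V x))"
begin

definition "Z = ZV V"
definition "\<rho> x = exp (- V x) / Z"

lemma Z_pos: "Z > 0"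
proof -
  have "Z \<ge> 0" unfolding Z_def ZV_def by (rule integral_nonneg_AE) simp
  moreover have "Z \<noteq> 0"
  proof
    assume "Z = 0"
    then have "AE x in lborel. exp (- V x) = 0"
      using integral_nonneg_eq_0_iff_AE[OF expV_int] unfolding Z_def ZV_def by simp
    then have "AE x in (lborel::'a measure). False" by simp
    then have "emeasure lborel (UNIV::'a set) = 0" by (simp add: eventually_False ae_filter_eq_bot_iff)
    then show False by simp
  qed
  ultimately show ?thesis by simp
qed

lemma rho_pos: "\<rho> x > 0" using Z_pos by (simp add: \<rho>_def)

lemma rho_meas[measurable]: "\<rho> \<in> borel_measurable borel" unfolding \<rho>_def by measurable

lemma mu_def': "muV V = density lborel (\<lambda>x. ennreal (\<rho> x))"
  unfolding muV_def \<rho>_def Z_def ..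

lemma sets_mu[simp, measurable_cong]: "sets (muV V) = sets borel"
  by (simp add: mu_def')

lemma space_mu[simp]: "space (muV V) = UNIV"
  by (simp add: mu_def' )

lemma integral_mu: "g \<in> borel_measurable borel \<Longrightarrow> integral\<^sup>L (muV V) g = (\<integral>x. \<rho> x * g x \<partial>lborel)"
  unfolding mu_def' using rho_pos
  by (subst integral_density) (auto simp: less_imp_le)

lemma nn_integral_mu: "g \<in> borel_measurable borel \<Longrightarrow> integral\<^sup>N (muV V) g = (\<integral>\<^sup>+x. ennreal (\<rho> x) * g x \<partial>lborel)"
  unfolding mu_def' by (subst nn_integral_density) auto

lemma mu_UNIV: "emeasure (muV V) UNIV = 1"
proof -
  have "emeasure (muV V) UNIV = (\<integral>\<^sup>+x. ennreal (\<rho> x) \<partial>lborel)"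
    unfolding mu_def' by (subst emeasure_density) auto
  also have "\<dots> = ennreal (\<integral>x. \<rho> x \<partial>lborel)"
    using rho_pos expV_int unfolding \<rho>_def
    by (intro nn_integral_eq_integral) (auto simp: less_imp_le)
  also have "(\<integral>x. \<rho> x \<partial>lborel) = 1" unfolding \<rho>_def using Z_pos
    by (simp add: Z_def ZV_def)
  finally show ?thesis by simp
qed

lemma finite_mu: "finite_measure (muV V)"
  by (rule finite_measureI) (simp add: mu_UNIV)

lemma integrable_mu_bdd:
  fixes g :: "'a \<Rightarrow> real"
  shows "g \<in> borel_measurable borel \<Longrightarrow> (\<And>x. \<bar>g x\<bar> \<le> B) \<Longrightarrow> integrable (muV V) g"
  by (rule finite_measure.integrable_const_bound[OF finite_mu, where B=B]) auto

lemma mu_le_1: fixes c :: real assumes that: "A \<in> sets borel" shows "\<bar>integral\<^sup>L (muV V) (\<lambda>x. indicator A x * c)\<bar> \<le> \<bar>c\<bar>"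
proof -
  have "integral\<^sup>L (muV V) (\<lambda>x. indicator A x * c) = measure (muV V) A * c"
    using that by simp
  moreover have "measure (muV V) A \<le> 1"
    using finite_measure.bounded_measure[OF finite_mu, of A] mu_UNIV
    by (simp add: measure_def)
  ultimately show ?thesis
    by (simp add: abs_mult mult_left_le_one_le)
qed

lemma V_bdd_cball: "\<exists>K. \<forall>x\<in>cball 0 t. \<bar>V x\<bar> \<le> K"
  using V_locbdd[of "cball 0 t"] by (auto simp: bounded_iff)

lemma hV_le: "x \<in> cball 0 t \<Longrightarrow> hV V t \<le> exp (V x)"
  unfolding hV_def by (rule cINF_lower) (auto intro: bdd_belowI[where m=0] less_imp_le)

lemma HV_ge: "x \<in> cball 0 t \<Longrightarrow> exp (V x) \<le> HV V t"
proof -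
  obtain K where K: "\<forall>x\<in>cball 0 t. \<bar>V x\<bar> \<le> K" using V_bdd_cball by blast
  assume x: "x \<in> cball 0 t"
  show ?thesis unfolding HV_def
    by (rule cSUP_upper[OF x]) (use K in \<open>auto intro!: bdd_aboveI[where M="exp K"]\<close>)
qed

lemma hV_pos: "t \<ge> 0 \<Longrightarrow> hV V t > 0"
proof -
  assume t: "t \<ge> 0"
  obtain K where K: "\<forall>x\<in>cball 0 t. \<bar>V x\<bar> \<le> K" using V_bdd_cball by blast
  have "exp (- K) \<le> hV V t" unfolding hV_def
    apply (rule cINF_greatest)
    using t apply auto[1]
    using K by fastforce
  then show ?thesis by (meson exp_gt_zero less_le_trans)
qed

lemma hV_le_HV: "t \<ge> 0 \<Longrightarrow> hV V t \<le> HV V t"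
  using hV_le[of 0 t] HV_ge[of 0 t] by simp

lemma HV_ge0: "t \<ge> 0 \<Longrightarrow> exp (V 0) \<le> HV V t"
  using HV_ge[of 0 t] by simp

end

lemma geo2: fixes q :: real and n d :: nat
  shows "((1/2::real)^n)^d * ((1/2)^(n+1)) powr q = (1/2) powr q * ((1/2) powr (q + d))^n"
proof -
  have e: "(1/2::real) powr (real (n+1)) = (1/2)^(n+1)"
    by (rule powr_realpow) simp
  have "((1/2::real)^n)^d = (1/2) powr (real n * real d)"
    by (simp add: powr_realpow[symmetric] powr_powr power_mult[symmetric] mult.commute)
  moreover have "((1/2::real)^(n+1)) powr q = (1/2) powr ((real n + 1) * q)"
    unfolding e[symmetric] powr_powr by (simp add: add.commute)
  moreover have "((1/2::real) powr (q + d))^n = (1/2) powr ((q+d) * real n)"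
    by (simp add: powr_realpow[symmetric] powr_powr)
  ultimately show ?thesis by (simp add: powr_add[symmetric] algebra_simps)
qed
lemma geo3: fixes p :: real and n d :: nat
  shows "((2::real)^n) powr (-p) * (2^n)^d = ((2::real) powr (d - p))^n"
proof -
  have "((2::real)^n) powr (-p) = 2 powr (real n * (-p))"
    by (simp add: powr_realpow[symmetric] powr_powr)
  moreover have "((2::real)^n)^d = 2 powr (real n * real d)"
    by (simp add: powr_realpow[symmetric] powr_powr power_mult[symmetric] mult.commute)
  moreover have "((2::real) powr (d - p))^n = 2 powr ((d - p) * real n)"
    by (simp add: powr_realpow[symmetric] powr_powr)
  ultimately show ?thesis by (simp add: powr_add[symmetric] algebra_simps)
qed

lemma exists_shell_in:
  fixes r :: real assumes r: "0 < r" "r \<le> 1"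
  shows "\<exists>n. (1/2)^(n+1) < r \<and> r \<le> (1/2)^n"
proof -
  obtain n0 where "(1/2::real)^n0 < r" using real_arch_pow_inv[OF r(1), of "1/2"] by auto
  moreover have "(1/2::real)^(n0+1) \<le> (1/2)^n0" by (rule power_decreasing) auto
  ultimately have ex: "\<exists>n. (1/2::real)^(n+1) < r" by (meson le_less_trans)
  define n where "n = (LEAST n. (1/2::real)^(n+1) < r)"
  have n1: "(1/2::real)^(n+1) < r" unfolding n_def by (rule LeastI_ex[OF ex])
  have "r \<le> (1/2)^n"
  proof (cases n)
    case 0 thus ?thesis using r by simp
  next
    case (Suc m)
    then have "m < n" by simp
    then have "\<not> (1/2::real)^(m+1) < r" unfolding n_def by (rule not_less_Least)
    thus ?thesis using Suc by simp
  qed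
  with n1 show ?thesis by blast
qed

lemma exists_shell_out:
  fixes r :: real assumes r: "1 < r"
  shows "\<exists>n. 2^n < r \<and> r \<le> (2::real)^(n+1)"
proof -
  obtain n0 where "r < (2::real)^n0" using real_arch_pow[of 2 r] by auto
  moreover have "(2::real)^n0 \<le> 2^(n0+1)" by (rule power_increasing) auto
  ultimately have ex: "\<exists>n. r \<le> (2::real)^(n+1)" by (meson less_le_trans less_imp_le)
  define n where "n = (LEAST n. r \<le> (2::real)^(n+1))"
  have n1: "r \<le> (2::real)^(n+1)" unfolding n_def by (rule LeastI_ex[OF ex])
  have "2^n < r"
  proof (cases n)
    case 0 thus ?thesis using r by simp
  next
    case (Suc m)
    then have "m < n" by simp
    then have "\<not> r \<le> (2::real)^(m+1)" unfolding n_def by (rule not_less_Least)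
    thus ?thesis using Suc by simp
  qed
  with n1 show ?thesis by blast
qed


lemma cball_sets_borel[measurable]: "cball (x::'a::euclidean_space) r \<in> sets borel"
  by (simp add: borel_closed)

lemma ball_sets_borel[measurable]: "ball (x::'a::euclidean_space) r \<in> sets borel"
  by (simp add: borel_open)

lemma kernel_nn_bound:
  fixes f :: "'a::euclidean_space \<Rightarrow> real"
  assumes M: "\<And>x. \<bar>f x\<bar> \<le> M" and Lip: "\<And>x y. \<bar>f x - f y\<bar> \<le> L * norm (x - y)"
    and L0: "L \<ge> 0" and \<alpha>: "0 < \<alpha>" "\<alpha> < 2"
  shows "\<exists>K. \<forall>x. (\<integral>\<^sup>+y. ennreal ((f y - f x)\<^sup>2 / norm (y - x) powr (real DIM('a) + \<alpha>)) \<partial>lborel) \<le> ennreal K"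
proof -
  define d where "d = DIM('a)"
  have d1: "d \<ge> 1" unfolding d_def by (simp add: DIM_positive Suc_le_eq)
  define p where "p = real d + \<alpha>"
  define q where "q = 2 - p"
  define w where "w = unit_ball_vol (real d)"
  have w0: "w \<ge> 0" unfolding w_def by simp
  define c where "c n = L\<^sup>2 * (1 + ((1/2::real)^(n+1)) powr q)" for n :: nat
  define e where "e n = 4*M\<^sup>2 * ((2::real)^n) powr (-p)" for n :: nat
  have c0: "c n \<ge> 0" for n unfolding c_def by simp
  have e0: "e n \<ge> 0" for n unfolding e_def by simp
  define a where "a n = c n * (w * ((1/2::real)^n)^d)" for n :: nat
  define b where "b n = e n * (w * ((2::real)^(n+1))^d)" for n :: nat
  have a0: "a n \<ge> 0" for n unfolding a_def using c0 w0 by simp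
  have b0: "b n \<ge> 0" for n unfolding b_def using e0 w0 by simp
  have sa: "summable a"
  proof -
    have eq: "a n = L\<^sup>2 * w * ((1/2)^d)^n + L\<^sup>2 * w * (1/2) powr q * ((1/2) powr (q + d))^n" for n
      unfolding a_def c_def using geo2[of n d q]
      by (simp add: algebra_simps power_mult[symmetric] mult.commute[of n d])
    have "(1/2::real) powr (q + d) < 1"
      unfolding q_def p_def using \<alpha> by (subst powr01_less_one) auto
    moreover have "(1/2::real)^d < 1" using d1 by (simp add: power_less_one_iff)
    ultimately show ?thesis unfolding eq
      by (intro summable_add summable_mult summable_geometric) auto
  qed
  have sb: "summable b"
  proof -
    have eq: "b n = 4*M\<^sup>2 * w * 2^d * ((2::real) powr (d - p))^n" for n
      unfolding b_def e_def using geo3[of n p d]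
      by (simp add: algebra_simps power_mult_distrib)
    have "(2::real) powr (d - p) < 1" unfolding p_def using \<alpha> by (intro powr_less_one) auto
    then show ?thesis unfolding eq
      by (intro summable_mult summable_geometric) auto
  qed
  define K where "K = suminf a + suminf b"
  have "(\<integral>\<^sup>+y. ennreal ((f y - f x)\<^sup>2 / norm (y - x) powr (real DIM('a) + \<alpha>)) \<partial>lborel) \<le> ennreal K" for x
  proof -
    define G where "G y = (\<Sum>n. ennreal (c n) * indicator (cball x ((1/2)^n)) y)
       + (\<Sum>n. ennreal (e n) * indicator (cball x (2^(n+1))) y)" for y
    have pw: "ennreal ((f y - f x)\<^sup>2 / norm (y - x) powr p) \<le> G y" for y
    proof -
      define r where "r = norm (y - x)"
      have dxy: "dist x y = r" unfolding r_def by (simp add: dist_norm norm_minus_commute)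
      define F1 where "F1 n = ennreal (c n) * indicator (cball x ((1/2)^n)) y" for n
      define F2 where "F2 n = ennreal (e n) * indicator (cball x (2^(n+1))) y" for n
      have G: "G y = suminf F1 + suminf F2" unfolding G_def F1_def F2_def ..
      consider "r = 0" | "0 < r" "r \<le> 1" | "1 < r" unfolding r_def by fastforce
      then show ?thesis
      proof cases
        case 1 then have "y = x" unfolding r_def by simp
        then show ?thesis by simp
      next
        case 2
        then obtain n where n: "(1/2)^(n+1) < r" "r \<le> (1/2)^n" using exists_shell_in by blast
        have rq: "r powr q \<le> 1 + ((1/2::real)^(n+1)) powr q"
        proof (cases "q \<ge> 0")
          case True
          then have "r powr q \<le> 1" using 2 by (intro powr_le1) auto
          then show ?thesis using powr_ge_zero[of "(1/2::real)^(n+1)" q] by linarith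
        next
          case False
          then have "r powr q \<le> ((1/2::real)^(n+1)) powr q"
            using n by (intro powr_mono2') auto
          then show ?thesis by simp
        qed
        have a: "\<bar>f y - f x\<bar> \<le> L*r" using Lip[of y x] unfolding r_def .
        have "(f y - f x)\<^sup>2 \<le> (L * r)\<^sup>2" using power_mono[OF a abs_ge_zero, of 2] by simp
        then have "(f y - f x)\<^sup>2 / r powr p \<le> L\<^sup>2 * r\<^sup>2 / r powr p"
          by (intro divide_right_mono) (simp_all add: power_mult_distrib)
        also have "L\<^sup>2 * r\<^sup>2 / r powr p = L\<^sup>2 * r powr q"
        proof -
          have "r powr q = r powr 2 / r powr p" unfolding q_def by (rule powr_diff)
          also have "r powr 2 = r\<^sup>2" using 2 by (simp add: powr_numeral)
          finally show ?thesis by simp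
        qed
        also have "L\<^sup>2 * r powr q \<le> c n" unfolding c_def using rq by (simp add: mult_left_mono)
        finally have kle: "(f y - f x)\<^sup>2 / r powr p \<le> c n" .
        have ind: "indicator (cball x ((1/2)^n)) y = (1::ennreal)"
          using n dxy by (simp add: indicator_def)
        have "ennreal ((f y - f x)\<^sup>2 / norm (y - x) powr p) \<le> F1 n"
          unfolding F1_def ind using kle by (simp add: r_def[symmetric] ennreal_leI)
        also have "F1 n \<le> suminf F1"
        proof -
          have "sum F1 {n} \<le> suminf F1" by (rule sum_le_suminf) auto
          then show ?thesis by simp
        qed
        also have "\<dots> \<le> G y" unfolding G by (rule add_increasing2) auto
        finally show ?thesis .
      next
        case 3
        then obtain n where n: "2^n < r" "r \<le> (2::real)^(n+1)" using exists_shell_out by blast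
        have a: "\<bar>f y - f x\<bar> \<le> 2 * M" using M[of x] M[of y] by linarith
        have "(f y - f x)\<^sup>2 \<le> (2*M)\<^sup>2" using power_mono[OF a abs_ge_zero, of 2] by simp
        then have "(f y - f x)\<^sup>2 / r powr p \<le> 4*M\<^sup>2 / r powr p"
          by (intro divide_right_mono) (simp_all add: power_mult_distrib)
        also have "\<dots> \<le> 4*M\<^sup>2 / ((2::real)^n) powr p"
        proof (rule divide_left_mono)
          show "((2::real)^n) powr p \<le> r powr p" using n \<alpha> unfolding p_def by (intro powr_mono2) auto
          show "0 \<le> 4*M\<^sup>2" by simp
          show "0 < r powr p * ((2::real)^n) powr p" using 3 by simp
        qed
        also have "\<dots> = e n" unfolding e_def by (simp add: powr_minus_divide)
        finally have kle: "(f y - f x)\<^sup>2 / r powr p \<le> e n" .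
        have ind: "indicator (cball x (2^(n+1))) y = (1::ennreal)"
          using n dxy by (simp add: indicator_def)
        have "ennreal ((f y - f x)\<^sup>2 / norm (y - x) powr p) \<le> F2 n"
          unfolding F2_def ind using kle by (simp add: r_def[symmetric] ennreal_leI)
        also have "F2 n \<le> suminf F2"
        proof -
          have "sum F2 {n} \<le> suminf F2" by (rule sum_le_suminf) auto
          then show ?thesis by simp
        qed
        also have "\<dots> \<le> G y" unfolding G by (rule add_increasing) auto
        finally show ?thesis .
      qed
    qed
    have "(\<integral>\<^sup>+y. ennreal ((f y - f x)\<^sup>2 / norm (y - x) powr p) \<partial>lborel) \<le> (\<integral>\<^sup>+y. G y \<partial>lborel)"
      by (rule nn_integral_mono) (rule pw)
    also have "\<dots> = (\<integral>\<^sup>+y. (\<Sum>n. ennreal (c n) * indicator (cball x ((1/2)^n)) y) \<partial>lborel)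
       + (\<integral>\<^sup>+y. (\<Sum>n. ennreal (e n) * indicator (cball x (2^(n+1))) y) \<partial>lborel)"
      unfolding G_def by (rule nn_integral_add) measurable
    also have "(\<integral>\<^sup>+y. (\<Sum>n. ennreal (c n) * indicator (cball x ((1/2)^n)) y) \<partial>lborel)
       = (\<Sum>n. ennreal (a n))"
    proof -
      have "(\<integral>\<^sup>+y. (\<Sum>n. ennreal (c n) * indicator (cball x ((1/2)^n)) y) \<partial>lborel)
         = (\<Sum>n. \<integral>\<^sup>+y. ennreal (c n) * indicator (cball x ((1/2)^n)) y \<partial>lborel)"
        by (rule nn_integral_suminf) measurable
      also have "\<dots> = (\<Sum>n. ennreal (a n))"
        by (rule suminf_cong) (simp add: nn_integral_cmult_indicator emeasure_cball a_def d_def w_def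
            ennreal_mult' c0)
      finally show ?thesis .
    qed
    also have "(\<integral>\<^sup>+y. (\<Sum>n. ennreal (e n) * indicator (cball x (2^(n+1))) y) \<partial>lborel)
       = (\<Sum>n. ennreal (b n))"
    proof -
      have "(\<integral>\<^sup>+y. (\<Sum>n. ennreal (e n) * indicator (cball x (2^(n+1))) y) \<partial>lborel)
         = (\<Sum>n. \<integral>\<^sup>+y. ennreal (e n) * indicator (cball x (2^(n+1))) y \<partial>lborel)"
        by (rule nn_integral_suminf) measurable
      also have "\<dots> = (\<Sum>n. ennreal (b n))"
        by (rule suminf_cong) (simp add: nn_integral_cmult_indicator emeasure_cball b_def d_def w_def
            ennreal_mult' e0)
      finally show ?thesis .
    qed
    also have "(\<Sum>n. ennreal (a n)) + (\<Sum>n. ennreal (b n)) = ennreal K"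
      unfolding K_def using a0 b0 sa sb
      by (simp add: suminf_ennreal2 suminf_nonneg ennreal_plus)
    finally show ?thesis unfolding p_def d_def .
  qed
  then show ?thesis by blast
qed



lemma integrable_bdd_support:
  fixes h :: "'a::euclidean_space \<Rightarrow> real"
  assumes [measurable]: "h \<in> borel_measurable borel" "S \<in> sets borel"
    and "bounded S" and B: "\<And>x. x \<in> S \<Longrightarrow> \<bar>h x\<bar> \<le> B"
  shows "integrable lborel (\<lambda>x. indicator S x * h x)"
proof (rule integrableI_bounded_set[where A=S and B=B])
  show "emeasure lborel S < \<infinity>" using assms(3) by (rule emeasure_bounded_finite)
qed (use B in \<open>auto simp: indicator_def\<close>)

lemma avg_CS:
  fixes u :: "'a::euclidean_space \<Rightarrow> real"
  assumes [measurable]: "A \<in> sets borel" and mA: "measure lborel A = a" "a > 0" "emeasure lborel A < \<infinity>"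
    and i1: "integrable lborel (\<lambda>y. indicator A y * u y)"
    and i2: "integrable lborel (\<lambda>y. indicator A y * (u y)\<^sup>2)"
  shows "(\<integral>y. indicator A y * u y \<partial>lborel)\<^sup>2 \<le> a * (\<integral>y. indicator A y * (u y)\<^sup>2 \<partial>lborel)"
proof -
  define s1 where "s1 = (\<integral>y. indicator A y * u y \<partial>lborel)"
  define s2 where "s2 = (\<integral>y. indicator A y * (u y)\<^sup>2 \<partial>lborel)"
  define c where "c = s1 / a"
  have i3: "integrable lborel (indicator A :: 'a \<Rightarrow> real)"
    using mA by (intro integrable_real_indicator) auto
  have eq: "(\<lambda>y. indicator A y * (u y - c)\<^sup>2) = (\<lambda>y. indicator A y * (u y)\<^sup>2 - (2*c) * (indicator A y * u y) + c\<^sup>2 * indicator A y)"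
    by (auto simp: indicator_def power2_diff algebra_simps)
  have "0 \<le> (\<integral>y. indicator A y * (u y - c)\<^sup>2 \<partial>lborel)"
    by (rule integral_nonneg_AE) (auto simp: indicator_def)
  also have "\<dots> = s2 - (2*c) * s1 + c\<^sup>2 * a"
    unfolding eq s1_def s2_def using i1 i2 i3 mA by simp
  also have "\<dots> = s2 - s1\<^sup>2 / a" unfolding c_def using mA by (simp add: power2_eq_square field_simps)
  finally have "s1\<^sup>2 / a \<le> s2" by simp
  then show ?thesis unfolding s1_def[symmetric] s2_def[symmetric] using mA by (simp add: field_simps)
qed


lemma pointwise_local:
  fixes f :: "'a::euclidean_space \<Rightarrow> real" and x :: 'a
  assumes fm[measurable]: "f \<in> borel_measurable borel" and M: "\<And>y. \<bar>f y\<bar> \<le> M"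
    and [measurable]: "A \<in> sets borel" "B \<in> sets borel" and bA: "bounded A" and bB: "bounded B"
    and mA: "measure lborel A = a" "a > 0" and AB: "A \<subseteq> B"
    and near: "\<And>y. y \<in> A \<Longrightarrow> norm (y - x) \<le> \<epsilon>" and \<epsilon>: "\<epsilon> > 0" and p: "p \<ge> 0"
    and kint: "integrable lborel (\<lambda>y. (f y - f x)\<^sup>2 / norm (y - x) powr p)"
  shows "(f x)\<^sup>2 \<le> 2 * \<epsilon> powr p / a * (\<integral>y. (f y - f x)\<^sup>2 / norm (y - x) powr p \<partial>lborel)
     + 2 * (\<integral>y. indicator B y * \<bar>f y\<bar> \<partial>lborel) / a\<^sup>2 * (\<integral>y. indicator A y * \<bar>f y\<bar> \<partial>lborel)"
proof -
  have eA: "emeasure lborel A < \<infinity>" using bA by (rule emeasure_bounded_finite)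
  define s1 where "s1 = (\<integral>y. indicator A y * \<bar>f x - f y\<bar> \<partial>lborel)"
  define s2 where "s2 = (\<integral>y. indicator A y * (\<bar>f x - f y\<bar>)\<^sup>2 \<partial>lborel)"
  define v where "v = (\<integral>y. indicator A y * \<bar>f y\<bar> \<partial>lborel)"
  define F where "F = (\<integral>y. indicator B y * \<bar>f y\<bar> \<partial>lborel)"
  define G where "G = (\<integral>y. (f y - f x)\<^sup>2 / norm (y - x) powr p \<partial>lborel)"
  have bd: "\<bar>f x - f y\<bar> \<le> 2*M" for y using M[of x] M[of y] by arith
  have M0: "M \<ge> 0" using M[of x] by arith
  have i0: "integrable lborel (\<lambda>y. indicator A y * \<bar>f x\<bar>)"
    by (rule integrable_bdd_support[where B="\<bar>f x\<bar>"]) (auto simp: bA)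
  have i1: "integrable lborel (\<lambda>y. indicator A y * \<bar>f x - f y\<bar>)"
    by (rule integrable_bdd_support[where B="2*M"]) (auto simp: bA bd)
  have i2: "integrable lborel (\<lambda>y. indicator A y * (\<bar>f x - f y\<bar>)\<^sup>2)"
  proof (rule integrable_bdd_support[where B="(2*M)\<^sup>2"])
    fix y show "\<bar>(\<bar>f x - f y\<bar>)\<^sup>2\<bar> \<le> (2*M)\<^sup>2" using power_mono[OF bd[of y] abs_ge_zero, of 2] by simp
  qed (auto simp: bA)
  have i3: "integrable lborel (\<lambda>y. indicator A y * \<bar>f y\<bar>)"
    by (rule integrable_bdd_support[where B="M"]) (auto simp: bA M)
  have i4: "integrable lborel (\<lambda>y. indicator B y * \<bar>f y\<bar>)"
    by (rule integrable_bdd_support[where B="M"]) (auto simp: bB M)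
  have c1: "a * \<bar>f x\<bar> \<le> s1 + v"
  proof -
    have "a * \<bar>f x\<bar> = (\<integral>y. indicator A y * \<bar>f x\<bar> \<partial>lborel)" using mA by simp
    also have "\<dots> \<le> (\<integral>y. indicator A y * \<bar>f x - f y\<bar> + indicator A y * \<bar>f y\<bar> \<partial>lborel)"
    proof (rule integral_mono)
      show "integrable lborel (\<lambda>y. indicator A y * \<bar>f x - f y\<bar> + indicator A y * \<bar>f y\<bar>)"
        using i1 i3 by simp
      fix y show "indicator A y * \<bar>f x\<bar> \<le> indicator A y * \<bar>f x - f y\<bar> + indicator A y * \<bar>f y\<bar>"
        using abs_triangle_ineq[of "f x - f y" "f y"] by (auto simp: indicator_def)
    qed (rule i0)
    also have "\<dots> = s1 + v" unfolding s1_def v_def using i1 i3 by simp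
    finally show ?thesis .
  qed
  have c2: "s1\<^sup>2 \<le> a * s2"
    unfolding s1_def s2_def by (rule avg_CS[OF _ mA eA i1 i2]) simp
  have c3: "s2 \<le> \<epsilon> powr p * G"
  proof -
    have "s2 \<le> (\<integral>y. \<epsilon> powr p * ((f y - f x)\<^sup>2 / norm (y - x) powr p) \<partial>lborel)"
      unfolding s2_def
    proof (rule integral_mono)
      show "integrable lborel (\<lambda>y. \<epsilon> powr p * ((f y - f x)\<^sup>2 / norm (y - x) powr p))"
        using integrable_mult_right[OF kint, of "\<epsilon> powr p"] by simp
      fix y
      show "indicator A y * (\<bar>f x - f y\<bar>)\<^sup>2 \<le> \<epsilon> powr p * ((f y - f x)\<^sup>2 / norm (y - x) powr p)"
      proof (cases "y \<in> A \<and> y \<noteq> x")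
        case True
        define r where "r = norm (y - x)"
        have r0: "r > 0" using True unfolding r_def by simp
        have "r powr p \<le> \<epsilon> powr p" using near True p r0 unfolding r_def by (intro powr_mono2) auto
        then have "1 \<le> \<epsilon> powr p / r powr p" using r0 by simp
        then have "(f y - f x)\<^sup>2 * 1 \<le> (f y - f x)\<^sup>2 * (\<epsilon> powr p / r powr p)"
          by (intro mult_left_mono) auto
        then show ?thesis using True by (simp add: r_def[symmetric] power2_commute mult.commute)
      next
        case False
        then show ?thesis by (auto simp: indicator_def)
      qed
    qed (use i2 in auto)
    then show ?thesis unfolding G_def by (simp only: integral_mult_right_zero)
  qed
  have c4: "v \<le> F" unfolding v_def F_def
    by (rule integral_mono) (use i3 i4 AB in \<open>auto simp: indicator_def\<close>)
  have c5: "v \<ge> 0" unfolding v_def by (rule integral_nonneg_AE) auto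
  have s10: "s1 \<ge> 0" unfolding s1_def by (rule integral_nonneg_AE) auto
  have t1: "(f x)\<^sup>2 \<le> ((s1+v)/a)\<^sup>2"
  proof -
    have "\<bar>f x\<bar> \<le> (s1+v)/a" using c1 mA by (simp add: field_simps)
    from power_mono[OF this abs_ge_zero, of 2] show ?thesis by simp
  qed
  have t2: "((s1+v)/a)\<^sup>2 \<le> 2*(s1\<^sup>2/a\<^sup>2) + 2*((v ^ 2)/a\<^sup>2)"
  proof -
    have "(s1 + v) ^ 2 \<le> 2 * (s1 ^ 2) + 2 * (v ^ 2)" using sum_squares_ge_zero[of "s1 - v" 0]
      by (simp add: power2_eq_square algebra_simps)
    then show ?thesis using mA by (simp add: power_divide field_simps)
  qed
  have t3: "s1\<^sup>2/a\<^sup>2 \<le> s2/a"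
    using c2 mA by (simp add: field_simps power2_eq_square)
  have t4: "(v ^ 2)/a\<^sup>2 \<le> F* v/a\<^sup>2"
    using c4 c5 by (intro divide_right_mono) (auto simp: power2_eq_square mult_right_mono)
  have t5: "s2/a \<le> \<epsilon> powr p * G / a" using c3 mA by (intro divide_right_mono) auto
  have "(f x)\<^sup>2 \<le> 2*(\<epsilon> powr p * G / a) + 2*(F* v/a\<^sup>2)" using t1 t2 t3 t4 t5 by linarith
  also have "\<dots> = 2 * \<epsilon> powr p / a * G + 2 * F / a\<^sup>2 * v" by simp
  finally show ?thesis unfolding G_def F_def v_def .
qed



lemma shift_ball_facts:
  fixes x y :: "'a::euclidean_space"
  assumes t: "t > 1" and \<epsilon>: "0 < \<epsilon>" "\<epsilon> \<le> 1" and x: "norm x \<le> t"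
    and y: "dist ((1 - \<epsilon>/(2*t)) *\<^sub>R x) y < \<epsilon>/2"
  shows "norm y \<le> t" and "norm (y - x) \<le> \<epsilon>" and "dist ((1 / (1 - \<epsilon>/(2*t))) *\<^sub>R y) x < \<epsilon>"
proof -
  define l where "l = 1 - \<epsilon>/(2*t)"
  have l1: "l \<ge> 1/2" "l \<le> 1" unfolding l_def using t \<epsilon> by (auto simp: field_simps)
  have y': "norm (y - l *\<^sub>R x) < \<epsilon>/2" using y unfolding l_def by (simp add: dist_norm norm_minus_commute)
  have "norm y \<le> norm (l *\<^sub>R x) + norm (y - l *\<^sub>R x)" by (metis norm_triangle_sub add.commute)
  also have "norm (l *\<^sub>R x) \<le> l * t" using l1 x by (simp add: mult_left_mono)
  finally have "norm y \<le> l * t + \<epsilon>/2" using y' by linarith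
  also have "l * t + \<epsilon>/2 = t" unfolding l_def using t by (simp add: field_simps)
  finally show "norm y \<le> t" .
  have "norm (y - x) \<le> norm (y - l *\<^sub>R x) + norm (l *\<^sub>R x - x)"
    by (metis norm_triangle_ineq diff_add_cancel add_diff_eq)
  also have "norm (l *\<^sub>R x - x) = (1 - l) * norm x"
  proof -
    have "l *\<^sub>R x - x = (- (1 - l)) *\<^sub>R x" by (simp add: algebra_simps)
    then show ?thesis using l1 by simp
  qed
  also have "(1 - l) * norm x \<le> (1 - l) * t" using l1 x by (intro mult_left_mono) auto
  also have "(1 - l) * t = \<epsilon>/2" unfolding l_def using t by (simp add: field_simps)
  finally show "norm (y - x) \<le> \<epsilon>" using y' by linarith
  have "(1/l) *\<^sub>R y - x = (1/l) *\<^sub>R (y - l *\<^sub>R x)" using l1 by (simp add: algebra_simps)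
  then have "dist ((1/l) *\<^sub>R y) x = (1/l) * norm (y - l *\<^sub>R x)" using l1 by (simp add: dist_norm)
  also have "\<dots> < (1/l) * (\<epsilon>/2)" using y' l1 by (intro mult_strict_left_mono) auto
  also have "\<dots> \<le> \<epsilon>" using l1 \<epsilon> by (simp add: field_simps)
  finally show "dist ((1 / (1 - \<epsilon>/(2*t))) *\<^sub>R y) x < \<epsilon>" unfolding l_def .
qed


lemma local_lebesgue:
  fixes f :: "'a::euclidean_space \<Rightarrow> real"
  assumes fm[measurable]: "f \<in> borel_measurable borel" and M: "\<And>y. \<bar>f y\<bar> \<le> M"
    and t: "t > 1" and \<epsilon>: "0 < \<epsilon>" "\<epsilon> \<le> 1" and p: "p \<ge> 0"
    and kint: "\<And>x. integrable lborel (\<lambda>y. (f y - f x)\<^sup>2 / norm (y - x) powr p)"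
    and gm[measurable]: "(\<lambda>x. \<integral>y. (f y - f x)\<^sup>2 / norm (y - x) powr p \<partial>lborel) \<in> borel_measurable borel"
    and gb: "\<And>x. \<bar>\<integral>y. (f y - f x)\<^sup>2 / norm (y - x) powr p \<partial>lborel\<bar> \<le> K"
  shows "(\<integral>x. indicator (cball 0 t) x * (f x)\<^sup>2 \<partial>lborel)
     \<le> 2 * \<epsilon> powr p / (unit_ball_vol DIM('a) * (\<epsilon>/2)^DIM('a)) *
          (\<integral>x. indicator (cball 0 t) x * (\<integral>y. (f y - f x)\<^sup>2 / norm (y - x) powr p \<partial>lborel) \<partial>lborel)
       + 2 * (\<integral>y. indicator (cball 0 t) y * \<bar>f y\<bar> \<partial>lborel) / (unit_ball_vol DIM('a) * (\<epsilon>/2)^DIM('a))\<^sup>2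
          * (unit_ball_vol DIM('a) * \<epsilon>^DIM('a) * (\<integral>y. indicator (cball 0 t) y * \<bar>f y\<bar> \<partial>lborel))"
proof -
  define d where "d = DIM('a)"
  define w where "w = unit_ball_vol (real d)"
  have w0: "w > 0" unfolding w_def by simp
  define a where "a = w * (\<epsilon>/2)^d"
  have a0: "a > 0" unfolding a_def using w0 \<epsilon> by simp
  define l where "l = 1 - \<epsilon>/(2*t)"
  define B where "B = cball (0::'a) t"
  define A where "A x = ball (l *\<^sub>R x) (\<epsilon>/2)" for x :: 'a
  define g where "g x = (\<integral>y. (f y - f x)\<^sup>2 / norm (y - x) powr p \<partial>lborel)" for x
  define F where "F = (\<integral>y. indicator B y * \<bar>f y\<bar> \<partial>lborel)"
  define I where "I x = (\<integral>y. indicator (A x) y * \<bar>f y\<bar> \<partial>lborel)" for x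
  have [measurable]: "B \<in> sets borel" unfolding B_def by simp
  have Hm[measurable]: "(\<lambda>(x, y). indicator (A x) y * \<bar>f y\<bar>) \<in> borel_measurable (borel \<Otimes>\<^sub>M lborel)"
  proof -
    have "(\<lambda>(x, y). indicator (A x) y * \<bar>f y\<bar>) = (\<lambda>(x::'a, y::'a). (if dist (l *\<^sub>R x) y < \<epsilon>/2 then 1 else 0) * \<bar>f y\<bar>)"
      by (auto simp: A_def indicator_def fun_eq_iff)
    also have "\<dots> \<in> borel_measurable (borel \<Otimes>\<^sub>M lborel)" by measurable
    finally show ?thesis .
  qed
  have Im[measurable]: "I \<in> borel_measurable borel" unfolding I_def by measurable
  have Hm2[measurable]: "(\<lambda>(x, y). indicator B x * (indicator (A x) y * \<bar>f y\<bar>)) \<in> borel_measurable (lborel \<Otimes>\<^sub>M lborel)"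
  proof -
    have "(\<lambda>(x, y). indicator B x * (indicator (A x) y * \<bar>f y\<bar>)) = (\<lambda>(x::'a, y::'a). indicator B x * (if dist (l *\<^sub>R x) y < \<epsilon>/2 then 1 else 0) * \<bar>f y\<bar>)"
      by (auto simp: A_def indicator_def fun_eq_iff)
    also have "\<dots> \<in> borel_measurable (lborel \<Otimes>\<^sub>M lborel)" by measurable
    finally show ?thesis .
  qed
  have bB: "bounded B" unfolding B_def by simp
  have AB: "A x \<subseteq> B" if "x \<in> B" for x
    using shift_ball_facts(1)[OF t \<epsilon>] that unfolding A_def B_def l_def by (auto simp: dist_norm)
  have iA: "integrable lborel (\<lambda>y. indicator (A x) y * \<bar>f y\<bar>)" for x
    by (rule integrable_bdd_support[where B=M]) (auto simp: A_def M)
  have iB: "integrable lborel (\<lambda>y. indicator B y * \<bar>f y\<bar>)"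
    by (rule integrable_bdd_support[where B=M]) (auto simp: bB M)
  have I0: "I x \<ge> 0" for x unfolding I_def by (rule integral_nonneg_AE) auto
  have IF: "I x \<le> F" if "x \<in> B" for x unfolding I_def F_def
    by (rule integral_mono[OF iA iB]) (use AB[OF that] in \<open>auto simp: indicator_def\<close>)
  have F0: "F \<ge> 0" unfolding F_def by (rule integral_nonneg_AE) auto
  have pw: "indicator B x * (f x)\<^sup>2 \<le> 2 * \<epsilon> powr p / a * (indicator B x * g x) + 2 * F / a\<^sup>2 * (indicator B x * I x)" for x
  proof (cases "x \<in> B")
    case True
    have mA: "measure lborel (A x) = a" unfolding A_def a_def w_def d_def
      using content_ball[of "\<epsilon>/2" "l *\<^sub>R x"] \<epsilon> by simp
    have "(f x)\<^sup>2 \<le> 2 * \<epsilon> powr p / a * g x + 2 * F / a\<^sup>2 * I x"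
      unfolding g_def F_def I_def
    proof (rule pointwise_local[OF fm M _ _ _ bB mA a0 AB[OF True] _ \<epsilon>(1) p kint])
      show "A x \<in> sets borel" "bounded (A x)" unfolding A_def by auto
      fix y assume "y \<in> A x"
      then show "norm (y - x) \<le> \<epsilon>" using shift_ball_facts(2)[OF t \<epsilon>] True
        unfolding A_def B_def l_def by auto
    qed simp
    then show ?thesis using True by simp
  qed simp
  have ig: "integrable lborel (\<lambda>x. indicator B x * g x)"
  proof (rule integrable_bdd_support[where B=K])
    fix x show "\<bar>g x\<bar> \<le> K" unfolding g_def by (rule gb)
  qed (auto simp: bB g_def)
  have iI: "integrable lborel (\<lambda>x. indicator B x * I x)"
    by (rule integrable_bdd_support[where B=F]) (auto simp: bB IF I0)
  have if2: "integrable lborel (\<lambda>x. indicator B x * (f x)\<^sup>2)"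
  proof (rule integrable_bdd_support[where B="M\<^sup>2"])
    fix x show "\<bar>(f x)\<^sup>2\<bar> \<le> M\<^sup>2" using power_mono[OF M[of x] abs_ge_zero, of 2] by simp
  qed (auto simp: bB)
  have step1: "(\<integral>x. indicator B x * (f x)\<^sup>2 \<partial>lborel) \<le>
      2 * \<epsilon> powr p / a * (\<integral>x. indicator B x * g x \<partial>lborel) + 2 * F / a\<^sup>2 * (\<integral>x. indicator B x * I x \<partial>lborel)"
  proof -
    have "(\<integral>x. indicator B x * (f x)\<^sup>2 \<partial>lborel) \<le>
      (\<integral>x. 2 * \<epsilon> powr p / a * (indicator B x * g x) + 2 * F / a\<^sup>2 * (indicator B x * I x) \<partial>lborel)"
      by (rule integral_mono[OF if2 _ pw]) (use ig iI in simp)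
    also have "\<dots> = 2 * \<epsilon> powr p / a * (\<integral>x. indicator B x * g x \<partial>lborel) + 2 * F / a\<^sup>2 * (\<integral>x. indicator B x * I x \<partial>lborel)"
      using ig iI by simp
    finally show ?thesis .
  qed
  have step2: "(\<integral>x. indicator B x * I x \<partial>lborel) \<le> w * \<epsilon>^d * F"
  proof -
    have T5: "ennreal (\<integral>x. indicator B x * I x \<partial>lborel) = (\<integral>\<^sup>+x. ennreal (indicator B x * I x) \<partial>lborel)"
      by (rule nn_integral_eq_integral[OF iI, symmetric]) (auto simp: I0)
    have T4: "ennreal (indicator B x * I x) = (\<integral>\<^sup>+y. ennreal (indicator B x * (indicator (A x) y * \<bar>f y\<bar>)) \<partial>lborel)" for x
    proof -
      have "integrable lborel (\<lambda>y. indicator B x * (indicator (A x) y * \<bar>f y\<bar>))"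
        using iA by simp
      then have "(\<integral>\<^sup>+y. ennreal (indicator B x * (indicator (A x) y * \<bar>f y\<bar>)) \<partial>lborel)
          = ennreal (\<integral>y. indicator B x * (indicator (A x) y * \<bar>f y\<bar>) \<partial>lborel)"
        by (rule nn_integral_eq_integral) auto
      also have "(\<integral>y. indicator B x * (indicator (A x) y * \<bar>f y\<bar>) \<partial>lborel) = indicator B x * I x"
        unfolding I_def by simp
      finally show ?thesis ..
    qed
    have T1: "(\<integral>\<^sup>+x. (\<integral>\<^sup>+y. ennreal (indicator B x * (indicator (A x) y * \<bar>f y\<bar>)) \<partial>lborel) \<partial>lborel)
        = (\<integral>\<^sup>+y. (\<integral>\<^sup>+x. ennreal (indicator B x * (indicator (A x) y * \<bar>f y\<bar>)) \<partial>lborel) \<partial>lborel)"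
      by (rule lborel_pair.Fubini'[symmetric]) measurable
    have T2: "(\<integral>\<^sup>+x. ennreal (indicator B x * (indicator (A x) y * \<bar>f y\<bar>)) \<partial>lborel)
        \<le> ennreal (indicator B y * \<bar>f y\<bar> * (w * \<epsilon>^d))" for y
    proof -
      have "(\<integral>\<^sup>+x. ennreal (indicator B x * (indicator (A x) y * \<bar>f y\<bar>)) \<partial>lborel)
         \<le> (\<integral>\<^sup>+x. ennreal (indicator B y * \<bar>f y\<bar>) * indicator (ball ((1/l) *\<^sub>R y) \<epsilon>) x \<partial>lborel)"
      proof (rule nn_integral_mono)
        fix x
        show "ennreal (indicator B x * (indicator (A x) y * \<bar>f y\<bar>))
           \<le> ennreal (indicator B y * \<bar>f y\<bar>) * indicator (ball ((1/l) *\<^sub>R y) \<epsilon>) x"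
        proof (cases "x \<in> B \<and> y \<in> A x")
          case True
          then have "y \<in> B" "x \<in> ball ((1/l) *\<^sub>R y) \<epsilon>"
            using shift_ball_facts(1,3)[OF t \<epsilon>, of x y] unfolding A_def B_def l_def by auto
          then show ?thesis using True by simp
        next
          case False
          then show ?thesis by (auto simp: indicator_def)
        qed
      qed
      also have "\<dots> = ennreal (indicator B y * \<bar>f y\<bar>) * emeasure lborel (ball ((1/l) *\<^sub>R y) \<epsilon>)"
        by (rule nn_integral_cmult_indicator) simp
      also have "\<dots> = ennreal (indicator B y * \<bar>f y\<bar> * (w * \<epsilon>^d))"
        using \<epsilon> w0 unfolding w_def d_def by (simp add: emeasure_ball ennreal_mult')
      finally show ?thesis .
    qed
    have T3: "(\<integral>\<^sup>+y. ennreal (indicator B y * \<bar>f y\<bar> * (w * \<epsilon>^d)) \<partial>lborel) = ennreal (F * (w * \<epsilon>^d))"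
    proof -
      have "(\<integral>\<^sup>+y. ennreal (indicator B y * \<bar>f y\<bar> * (w * \<epsilon>^d)) \<partial>lborel)
         = ennreal (\<integral>y. indicator B y * \<bar>f y\<bar> * (w * \<epsilon>^d) \<partial>lborel)"
        by (rule nn_integral_eq_integral) (use iB w0 \<epsilon> in auto)
      then show ?thesis unfolding F_def by simp
    qed
    have "ennreal (\<integral>x. indicator B x * I x \<partial>lborel) \<le> ennreal (F * (w * \<epsilon>^d))"
      unfolding T5 T4 T1 T3[symmetric] by (rule nn_integral_mono) (rule T2)
    then show ?thesis using F0 w0 \<epsilon> by (simp add: mult_ac ennreal_le_iff)
  qed
  have "2 * F / a\<^sup>2 * (\<integral>x. indicator B x * I x \<partial>lborel) \<le> 2 * F / a\<^sup>2 * (w * \<epsilon>^d * F)"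
    using step2 F0 a0 by (intro mult_left_mono) auto
  with step1 show ?thesis unfolding B_def g_def F_def a_def w_def d_def by linarith
qed



context VS begin

lemma rho_upper: "x \<in> cball 0 t \<Longrightarrow> \<rho> x \<le> 1 / (Z * hV V t)"
proof -
  assume x: "x \<in> cball 0 t"
  then have t: "t \<ge> 0" by (auto intro: order_trans[OF norm_ge_zero])
  have h: "hV V t > 0" by (rule hV_pos[OF t])
  have "exp (- V x) = 1 / exp (V x)" by (simp add: exp_minus field_simps)
  also have "\<dots> \<le> 1 / hV V t" using hV_le[OF x] h by (intro divide_left_mono) auto
  finally show ?thesis unfolding \<rho>_def using Z_pos by (simp add: divide_right_mono field_simps)
qed

lemma rho_lower: "x \<in> cball 0 t \<Longrightarrow> 1 / (Z * HV V t) \<le> \<rho> x"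
proof -
  assume x: "x \<in> cball 0 t"
  have e: "exp (V x) \<le> HV V t" by (rule HV_ge[OF x])
  have e0: "0 < exp (V x)" by simp
  then have "0 < HV V t" using e by linarith
  then have "0 < HV V t * exp (V x)" using e0 by (intro mult_pos_pos) auto
  then have "1 / HV V t \<le> 1 / exp (V x)" using e by (intro divide_left_mono) auto
  also have "\<dots> = exp (- V x)" by (simp add: exp_minus field_simps)
  finally show ?thesis unfolding \<rho>_def using Z_pos by (simp add: divide_right_mono field_simps)
qed

lemma local_mu:
  fixes f :: "'a \<Rightarrow> real"
  assumes fm[measurable]: "f \<in> borel_measurable borel" and M: "\<And>y. \<bar>f y\<bar> \<le> M"
    and t: "t > 1" and \<epsilon>: "0 < \<epsilon>" "\<epsilon> \<le> 1" and \<alpha>: "\<alpha> > 0"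
    and kint: "\<And>x. integrable lborel (\<lambda>y. (f y - f x)\<^sup>2 / norm (y - x) powr (real DIM('a) + \<alpha>))"
    and gm[measurable]: "(\<lambda>x. \<integral>y. (f y - f x)\<^sup>2 / norm (y - x) powr (real DIM('a) + \<alpha>) \<partial>lborel) \<in> borel_measurable borel"
    and gb: "\<And>x. \<bar>\<integral>y. (f y - f x)\<^sup>2 / norm (y - x) powr (real DIM('a) + \<alpha>) \<partial>lborel\<bar> \<le> K"
    and g0: "\<And>x. 0 \<le> (\<integral>y. (f y - f x)\<^sup>2 / norm (y - x) powr (real DIM('a) + \<alpha>) \<partial>lborel)"
  shows "(\<integral>x. indicator (cball 0 t) x * (f x)\<^sup>2 \<partial>muV V)
     \<le> (2^(DIM('a)+1) / unit_ball_vol DIM('a)) * \<epsilon> powr \<alpha> * (HV V t / hV V t) *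
          (\<integral>x. (\<integral>y. (f y - f x)\<^sup>2 / norm (y - x) powr (real DIM('a) + \<alpha>) \<partial>lborel) \<partial>muV V)
       + (2 * 4^DIM('a) / unit_ball_vol DIM('a)) / \<epsilon>^DIM('a) * (Z * (HV V t)\<^sup>2 / hV V t) *
          (\<integral>x. \<bar>f x\<bar> \<partial>muV V)\<^sup>2"
proof -
  define d where "d = DIM('a)"
  define p where "p = real d + \<alpha>"
  define w where "w = unit_ball_vol (real d)"
  have w0: "w > 0" unfolding w_def by simp
  define a where "a = w * (\<epsilon>/2)^d"
  have a0: "a > 0" unfolding a_def using w0 \<epsilon> by simp
  define B where "B = cball (0::'a) t"
  define g where "g x = (\<integral>y. (f y - f x)\<^sup>2 / norm (y - x) powr p \<partial>lborel)" for x
  define F where "F = (\<integral>y. indicator B y * \<bar>f y\<bar> \<partial>lborel)"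
  define LB where "LB = (\<integral>x. indicator B x * (f x)\<^sup>2 \<partial>lborel)"
  define LG where "LG = (\<integral>x. indicator B x * g x \<partial>lborel)"
  define D where "D = (\<integral>x. g x \<partial>muV V)"
  define m where "m = (\<integral>x. \<bar>f x\<bar> \<partial>muV V)"
  define h where "h = hV V t"
  define H where "H = HV V t"
  have t0: "t \<ge> 0" using t by simp
  have h0: "h > 0" unfolding h_def by (rule hV_pos[OF t0])
  have hH: "h \<le> H" unfolding h_def H_def by (rule hV_le_HV[OF t0])
  have H0: "H > 0" using h0 hH by simp
  have Z0: "Z > 0" by (rule Z_pos)
  have [measurable]: "B \<in> sets borel" unfolding B_def by simp
  have gm'[measurable]: "g \<in> borel_measurable borel" unfolding g_def p_def d_def by (rule gm)
  have bB: "bounded B" unfolding B_def by simp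
  have gb': "\<bar>g x\<bar> \<le> K" for x unfolding g_def p_def d_def by (rule gb)
  have g0': "g x \<ge> 0" for x unfolding g_def p_def d_def by (rule g0)
  have M0: "M \<ge> 0" using M[of 0] by simp
  have gK: "g x \<le> K" for x using gb'[of x] abs_ge_self order_trans by blast
  have K0: "K \<ge> 0" using gb'[of 0] abs_ge_zero order_trans by blast
  have f2: "\<bar>(f x)\<^sup>2\<bar> \<le> M\<^sup>2" for x using power_mono[OF M[of x] abs_ge_zero, of 2] by simp
  have rhoB: "\<rho> x \<le> 1/(Z*h)" if "x \<in> B" for x using rho_upper that unfolding B_def h_def by simp
  have rhoB': "1/(Z*H) \<le> \<rho> x" if "x \<in> B" for x using rho_lower that unfolding B_def H_def by simp
  have rb: "\<bar>\<rho> x * q\<bar> \<le> 1/(Z*h) * Q" if "x \<in> B" "\<bar>q\<bar> \<le> Q" for x q Q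
  proof -
    have "\<bar>\<rho> x * q\<bar> = \<rho> x * \<bar>q\<bar>" using rho_pos[of x] by (simp add: abs_mult)
    also have "\<dots> \<le> 1/(Z*h) * Q" using rhoB[OF that(1)] that(2) rho_pos[of x] Z0 h0
      by (intro mult_mono) auto
    finally show ?thesis .
  qed
  have LBe: "LB \<le> 2 * \<epsilon> powr p / a * LG + 2 * F / a\<^sup>2 * (w * \<epsilon>^d * F)"
    using local_lebesgue[OF fm M t \<epsilon> _ kint gm gb] \<alpha>
    unfolding LB_def LG_def F_def B_def g_def a_def w_def d_def p_def by simp
  have Lloc: "(\<integral>x. indicator B x * (f x)\<^sup>2 \<partial>muV V) \<le> LB / (Z*h)"
  proof -
    have "(\<integral>x. indicator B x * (f x)\<^sup>2 \<partial>muV V) = (\<integral>x. \<rho> x * (indicator B x * (f x)\<^sup>2) \<partial>lborel)"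
      by (rule integral_mu) measurable
    also have "\<dots> \<le> (\<integral>x. 1/(Z*h) * (indicator B x * (f x)\<^sup>2) \<partial>lborel)"
    proof (rule integral_mono)
      show "integrable lborel (\<lambda>x. \<rho> x * (indicator B x * (f x)\<^sup>2))"
      proof -
        have "integrable lborel (\<lambda>x. indicator B x * (\<rho> x * (f x)\<^sup>2))"
        proof (rule integrable_bdd_support[where B="1/(Z*h) * M\<^sup>2"])
          fix x assume "x \<in> B" then show "\<bar>\<rho> x * (f x)\<^sup>2\<bar> \<le> 1/(Z*h) * M\<^sup>2" by (rule rb) (rule f2)
        qed (auto simp: bB)
        then show ?thesis by (simp add: mult_ac)
      qed
      show "integrable lborel (\<lambda>x. 1/(Z*h) * (indicator B x * (f x)\<^sup>2))"
        using integrable_bdd_support[of "\<lambda>x. (f x)\<^sup>2" B "M\<^sup>2"] bB f2 by simp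
      fix x show "\<rho> x * (indicator B x * (f x)\<^sup>2) \<le> 1/(Z*h) * (indicator B x * (f x)\<^sup>2)"
      proof (cases "x \<in> B")
        case True
        have "\<rho> x * (f x)\<^sup>2 \<le> 1/(Z*h) * (f x)\<^sup>2" by (rule mult_right_mono[OF rhoB[OF True]]) simp
        then show ?thesis using True by simp
      qed simp
    qed
    also have "\<dots> = LB / (Z*h)" unfolding LB_def by simp
    finally show ?thesis .
  qed
  have iBg: "integrable lborel (\<lambda>x. indicator B x * g x)"
    using integrable_bdd_support[of g B K] bB gb' by simp
  have LGe: "LG \<le> Z * H * D"
  proof -
    have "LG \<le> (\<integral>x. Z * H * (\<rho> x * (indicator B x * g x)) \<partial>lborel)"
      unfolding LG_def
    proof (rule integral_mono[OF iBg])
      show "integrable lborel (\<lambda>x. Z * H * (\<rho> x * (indicator B x * g x)))"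
      proof -
        have "integrable lborel (\<lambda>x. indicator B x * (\<rho> x * g x))"
        proof (rule integrable_bdd_support[where B="1/(Z*h) * K"])
          fix x assume "x \<in> B" then show "\<bar>\<rho> x * g x\<bar> \<le> 1/(Z*h) * K" by (rule rb) (rule gb')
        qed (auto simp: bB)
        then show ?thesis by (simp add: mult_ac)
      qed
      fix x show "indicator B x * g x \<le> Z * H * (\<rho> x * (indicator B x * g x))"
      proof (cases "x \<in> B")
        case True
        have "1 \<le> Z * H * \<rho> x" using rhoB'[OF True] Z0 H0 by (simp add: field_simps)
        then have "1 * g x \<le> (Z * H * \<rho> x) * g x" using g0'[of x] by (intro mult_right_mono) auto
        then show ?thesis using True by (simp add: mult_ac)
      qed simp
    qed
    also have "\<dots> = Z * H * (\<integral>x. indicator B x * g x \<partial>muV V)"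
      by (simp add: integral_mu)
    also have "(\<integral>x. indicator B x * g x \<partial>muV V) \<le> D"
      unfolding D_def
      by (rule integral_mono) (auto intro!: integrable_mu_bdd[where B=K] simp: gb' g0' gK K0 indicator_def abs_mult)
    then have "Z * H * (\<integral>x. indicator B x * g x \<partial>muV V) \<le> Z * H * D" using Z0 H0 by simp
    finally show ?thesis .
  qed
  have Fe: "F \<le> Z * H * m"
  proof -
    have iBf: "integrable lborel (\<lambda>x. indicator B x * \<bar>f x\<bar>)"
      using integrable_bdd_support[of "\<lambda>x. \<bar>f x\<bar>" B M] bB M by simp
    have "F \<le> (\<integral>x. Z * H * (\<rho> x * (indicator B x * \<bar>f x\<bar>)) \<partial>lborel)"
      unfolding F_def
    proof (rule integral_mono[OF iBf])
      show "integrable lborel (\<lambda>x. Z * H * (\<rho> x * (indicator B x * \<bar>f x\<bar>)))"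
      proof -
        have "integrable lborel (\<lambda>x. indicator B x * (\<rho> x * \<bar>f x\<bar>))"
        proof (rule integrable_bdd_support[where B="1/(Z*h) * M"])
          fix x assume "x \<in> B" then show "\<bar>\<rho> x * \<bar>f x\<bar>\<bar> \<le> 1/(Z*h) * M" by (rule rb) (simp add: M)
        qed (auto simp: bB)
        then show ?thesis by (simp add: mult_ac)
      qed
      fix x show "indicator B x * \<bar>f x\<bar> \<le> Z * H * (\<rho> x * (indicator B x * \<bar>f x\<bar>))"
      proof (cases "x \<in> B")
        case True
        have "1 \<le> Z * H * \<rho> x" using rhoB'[OF True] Z0 H0 by (simp add: field_simps)
        then have "1 * \<bar>f x\<bar> \<le> (Z * H * \<rho> x) * \<bar>f x\<bar>" by (intro mult_right_mono) auto
        then show ?thesis using True by (simp add: mult_ac)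
      qed simp
    qed
    also have "\<dots> = Z * H * (\<integral>x. indicator B x * \<bar>f x\<bar> \<partial>muV V)"
      by (simp add: integral_mu)
    also have "(\<integral>x. indicator B x * \<bar>f x\<bar> \<partial>muV V) \<le> m"
      unfolding m_def
      by (rule integral_mono) (auto intro!: integrable_mu_bdd[where B=M] simp: M M0 indicator_def abs_mult)
    then have "Z * H * (\<integral>x. indicator B x * \<bar>f x\<bar> \<partial>muV V) \<le> Z * H * m" using Z0 H0 by simp
    finally show ?thesis .
  qed
  have F0: "F \<ge> 0" unfolding F_def by (rule integral_nonneg_AE) auto
  have c1: "2 * \<epsilon> powr p / a = (2^(d+1) / w) * \<epsilon> powr \<alpha>"
  proof -
    have "\<epsilon> powr p = \<epsilon>^d * \<epsilon> powr \<alpha>" unfolding p_def using \<epsilon> by (simp add: powr_add powr_realpow)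
    then show ?thesis unfolding a_def using \<epsilon> w0 by (simp add: field_simps power_divide)
  qed
  have c2: "2 * F / a\<^sup>2 * (w * \<epsilon>^d * F) = (2 * 4^d / w) / \<epsilon>^d * F\<^sup>2"
  proof -
    have e4: "(2::real)^d * 2^d = 4^d" by (simp add: power_mult_distrib[symmetric])
    show ?thesis unfolding a_def using \<epsilon> w0
      by (simp add: field_simps power_divide power2_eq_square power_mult_distrib e4 flip: power_mult)
  qed
  have "(\<integral>x. indicator B x * (f x)\<^sup>2 \<partial>muV V) \<le> LB / (Z*h)" by (rule Lloc)
  also have "\<dots> \<le> ((2^(d+1) / w) * \<epsilon> powr \<alpha> * LG + (2 * 4^d / w) / \<epsilon>^d * F\<^sup>2) / (Z*h)"
    using LBe c1 c2 Z0 h0 by (intro divide_right_mono) auto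
  also have "\<dots> \<le> ((2^(d+1) / w) * \<epsilon> powr \<alpha> * (Z * H * D) + (2 * 4^d / w) / \<epsilon>^d * (Z * H * m)\<^sup>2) / (Z*h)"
  proof (intro divide_right_mono add_mono mult_left_mono)
    show "F\<^sup>2 \<le> (Z * H * m)\<^sup>2" using Fe F0 by (intro power_mono) auto
  qed (use LGe w0 \<epsilon> Z0 h0 in auto)
  also have "\<dots> = (2^(d+1) / w) * \<epsilon> powr \<alpha> * (H / h) * D + (2 * 4^d / w) / \<epsilon>^d * (Z * H\<^sup>2 / h) * m\<^sup>2"
    using Z0 h0 by (simp add: field_simps power2_eq_square)
  finally show ?thesis unfolding B_def D_def g_def p_def m_def h_def H_def d_def w_def .
qed

end



lemma eps_choice:
  fixes c H h s \<alpha> :: real and d :: nat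
  assumes c: "c > 0" and hH: "h \<le> H" and h: "h > 0" and s: "s > 0" and \<alpha>: "\<alpha> > 0"
  shows "\<exists>\<epsilon>. 0 < \<epsilon> \<and> \<epsilon> \<le> 1 \<and> c * \<epsilon> powr \<alpha> * (H/h) \<le> s \<and> 1/\<epsilon>^d \<le> 1 + (c*H/(s*h)) powr (d/\<alpha>)"
proof -
  have H: "H > 0" using hH h by simp
  define u where "u = s*h/(c*H)"
  have u: "u > 0" unfolding u_def using s h c H by simp
  define \<epsilon> where "\<epsilon> = min 1 (u powr (1/\<alpha>))"
  have e0: "\<epsilon> > 0" unfolding \<epsilon>_def using u by simp
  have e1: "\<epsilon> \<le> 1" unfolding \<epsilon>_def by simp
  have "\<epsilon> powr \<alpha> \<le> (u powr (1/\<alpha>)) powr \<alpha>"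
    using e0 \<alpha> unfolding \<epsilon>_def by (intro powr_mono2) auto
  also have "\<dots> = u" using \<alpha> u by (simp add: powr_powr)
  finally have eu: "\<epsilon> powr \<alpha> \<le> u" .
  have A: "c * \<epsilon> powr \<alpha> * (H/h) \<le> s"
  proof -
    have "c * \<epsilon> powr \<alpha> * (H/h) \<le> c * u * (H/h)" using eu c H h by (intro mult_right_mono mult_left_mono) auto
    also have "\<dots> = s" unfolding u_def using c H h by (simp add: field_simps)
    finally show ?thesis .
  qed
  have B: "1/\<epsilon>^d \<le> 1 + (c*H/(s*h)) powr (d/\<alpha>)"
  proof (cases "u powr (1/\<alpha>) \<ge> 1")
    case True
    then have "\<epsilon> = 1" unfolding \<epsilon>_def by simp
    then show ?thesis by simp
  next
    case False
    then have ee: "\<epsilon> = u powr (1/\<alpha>)" unfolding \<epsilon>_def by simp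
    have "\<epsilon>^d = \<epsilon> powr (real d)" using e0 by (simp add: powr_realpow)
    also have "\<dots> = u powr (d/\<alpha>)" unfolding ee using u by (simp add: powr_powr)
    finally have "1/\<epsilon>^d = 1 / u powr (d/\<alpha>)" by simp
    also have "\<dots> = (1/u) powr (d/\<alpha>)" using u by (simp add: powr_divide)
    also have "1/u = c*H/(s*h)" unfolding u_def by simp
    finally show ?thesis by simp
  qed
  show ?thesis using e0 e1 A B by blast
qed

lemma const_simp:
  fixes H h s e c Zk :: real
  assumes hH: "h \<le> H" and h: "h > 0" and s: "s > 0" and e: "e \<ge> 0" and c: "c > 0" and Zk: "Zk \<ge> 0"
  shows "Zk * (H\<^sup>2 / h) * (1 + (c*H/(s*h)) powr e)
     \<le> Zk * (1 + c powr e) * (H powr (2 + e) * h powr (-1 - e) * (1 + s powr (- e)))"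
proof -
  have H: "H > 0" using hH h by simp
  define X where "X = H powr (2 + e) * h powr (-1 - e)"
  have X: "X = (H\<^sup>2 / h) * (H/h) powr e"
  proof -
    have p1: "H powr (2+e) = H powr 2 * H powr e" by (rule powr_add)
    have p2: "h powr (-1 - e) = h powr (-1) * h powr (-e)" using powr_add[of h "-1" "-e"] by simp
    have "X = (H powr 2 * H powr e) * (h powr (-1) * h powr (-e))"
      unfolding X_def p1 p2 ..
    also have "H powr 2 = H\<^sup>2" using H by (simp add: powr_numeral)
    also have "h powr (-1) = 1/h" using h by (simp add: powr_minus_divide)
    also have "h powr (-e) = 1 / h powr e" by (simp add: powr_minus_divide)
    also have "H powr e = (H/h) powr e * h powr e" using H h by (simp add: powr_divide)
    finally show ?thesis using h H by (simp add: field_simps)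
  qed
  have q1: "(H/h) powr e \<ge> 1" using hH h e by (intro ge_one_powr_ge_zero) auto
  have HX: "H\<^sup>2 / h \<le> X"
  proof -
    have "H\<^sup>2 / h * 1 \<le> H\<^sup>2 / h * (H/h) powr e" by (rule mult_left_mono[OF q1]) (use h in simp)
    then show ?thesis unfolding X by simp
  qed
  have eq2: "(c*H/(s*h)) powr e = c powr e * (H/h) powr e * s powr (-e)"
  proof -
    have "c*H/(s*h) = (c * (H/h)) / s" by simp
    then have "(c*H/(s*h)) powr e = (c * (H/h)) powr e / s powr e"
      using c H h s by (simp add: powr_divide powr_mult mult.commute)
    also have "(c * (H/h)) powr e = c powr e * (H/h) powr e" by (rule powr_mult)
    finally show ?thesis by (simp add: powr_minus_divide)
  qed
  have "(H\<^sup>2 / h) * (1 + (c*H/(s*h)) powr e) = H\<^sup>2 / h + X * c powr e * s powr (-e)"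
    unfolding eq2 X by (simp add: algebra_simps)
  also have "\<dots> \<le> X + X * c powr e * s powr (-e)" using HX by simp
  also have "\<dots> \<le> (1 + c powr e) * (X * (1 + s powr (- e)))"
  proof -
    have X0: "X \<ge> 0" unfolding X_def by simp
    have "0 \<le> X * c powr e + X * s powr (-e)" using X0 by simp
    then show ?thesis by (simp add: algebra_simps)
  qed
  finally have "(H\<^sup>2 / h) * (1 + (c*H/(s*h)) powr e) \<le> (1 + c powr e) * (X * (1 + s powr (- e)))" .
  from mult_left_mono[OF this Zk] show ?thesis by (simp only: X_def mult.assoc)
qed



locale OM =
  fixes \<omega> :: "'a::euclidean_space \<Rightarrow> real"
  assumes \<omega>_pos: "\<And>x. \<omega> x > 0"
    and \<omega>_cont: "continuous_on UNIV \<omega>"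
    and \<omega>_lim: "filterlim \<omega> at_top at_infinity"
begin

lemma nonempty_outside: "{x::'a. norm x \<ge> t} \<noteq> {}"
proof -
  obtain x :: 'a where "norm x = max t 0" using vector_choose_size[of "max t 0"] by auto
  then have "t \<le> norm x" by simp
  then show ?thesis by auto
qed

lemma oi_lower: "norm x \<ge> t \<Longrightarrow> omega_inf \<omega> t \<le> \<omega> x"
  unfolding omega_inf_def
  by (rule cINF_lower) (auto simp: less_imp_le \<omega>_pos intro!: bdd_belowI[where m=0])

lemma oi_greatest: "(\<And>x. norm x \<ge> t \<Longrightarrow> c \<le> \<omega> x) \<Longrightarrow> c \<le> omega_inf \<omega> t"
  unfolding omega_inf_def
  by (rule cINF_greatest) (use nonempty_outside in auto)

lemma oi_mono: "s \<le> t \<Longrightarrow> omega_inf \<omega> s \<le> omega_inf \<omega> t"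
  by (rule oi_greatest) (rule oi_lower, simp)

lemma big_R: "\<exists>R>0. \<forall>x. norm x \<ge> R \<longrightarrow> c \<le> \<omega> x"
proof -
  have "eventually (\<lambda>x. c \<le> \<omega> x) at_infinity" using \<omega>_lim by (simp add: filterlim_at_top)
  then obtain b where b: "\<forall>x. b \<le> norm x \<longrightarrow> c \<le> \<omega> x" by (auto simp: eventually_at_infinity)
  show ?thesis by (rule exI[of _ "max b 1"]) (use b in auto)
qed

lemma oi_pos: "omega_inf \<omega> t > 0"
proof -
  obtain R where R: "R > 0" "\<forall>x. norm x \<ge> R \<longrightarrow> 1 \<le> \<omega> x" using big_R[of 1] by auto
  define K where "K = {x::'a. t \<le> norm x \<and> norm x \<le> R}"
  have "\<exists>m>0. \<forall>x. norm x \<ge> t \<longrightarrow> m \<le> \<omega> x"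
  proof (cases "K = {}")
    case True
    have "\<forall>x. norm x \<ge> t \<longrightarrow> 1 \<le> \<omega> x"
    proof (intro allI impI)
      fix x :: 'a assume xt: "norm x \<ge> t"
      have "\<not> norm x \<le> R"
      proof
        assume "norm x \<le> R" then have "x \<in> K" using xt unfolding K_def by simp
        then show False using True by simp
      qed
      then show "1 \<le> \<omega> x" using R by simp
    qed
    then show ?thesis by (intro exI[of _ 1]) auto
  next
    case False
    have "compact K"
    proof (subst compact_eq_bounded_closed, rule conjI)
      show "bounded K" unfolding K_def by (auto simp: bounded_iff)
      have "K = {x. t \<le> norm x} \<inter> cball 0 R" unfolding K_def by auto
      also have "closed \<dots>"
        by (intro closed_Int closed_Collect_le continuous_on_const continuous_on_norm_id) auto
      finally show "closed K" .
    qed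
    moreover have "continuous_on K \<omega>" using continuous_on_subset[OF \<omega>_cont] by simp
    ultimately obtain x0 where x0: "x0 \<in> K" "\<forall>y\<in>K. \<omega> x0 \<le> \<omega> y"
      using continuous_attains_inf[of K \<omega>] False by auto
    have "\<forall>x. norm x \<ge> t \<longrightarrow> min 1 (\<omega> x0) \<le> \<omega> x"
    proof (intro allI impI)
      fix x :: 'a assume "norm x \<ge> t"
      show "min 1 (\<omega> x0) \<le> \<omega> x"
      proof (cases "norm x \<le> R")
        case True then have "x \<in> K" using \<open>norm x \<ge> t\<close> unfolding K_def by auto
        then show ?thesis using x0 by auto
      next
        case False
        then have "R \<le> norm x" by simp
        then have "1 \<le> \<omega> x" using R by blast
        then show ?thesis by (simp add: min.coboundedI1)
      qed
    qed
    then show ?thesis using \<omega>_pos[of x0] by (intro exI[of _ "min 1 (\<omega> x0)"]) auto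
  qed
  then obtain m where "m > 0" "\<forall>x. norm x \<ge> t \<longrightarrow> m \<le> \<omega> x" by auto
  then have "m \<le> omega_inf \<omega> t" by (intro oi_greatest) auto
  with \<open>m > 0\<close> show ?thesis by simp
qed

lemma kappa_prop:
  shows "kappa \<omega> c \<ge> 0" and "omega_inf \<omega> (kappa \<omega> c) \<ge> c"
proof -
  define S where "S = {s. s > 0 \<and> omega_inf \<omega> s \<ge> c}"
  obtain R where R: "R > 0" "\<forall>x. norm x \<ge> R \<longrightarrow> c \<le> \<omega> x" using big_R[of c] by auto
  have "R \<in> S" unfolding S_def using R by (auto intro!: oi_greatest)
  then have Sne: "S \<noteq> {}" by auto
  have bdd: "bdd_below S" unfolding S_def by (auto intro: bdd_belowI[where m=0])
  have k: "kappa \<omega> c = Inf S" unfolding kappa_def S_def ..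
  show k0: "kappa \<omega> c \<ge> 0" unfolding k by (rule cInf_greatest[OF Sne]) (auto simp: S_def)
  define \<kappa> where "\<kappa> = kappa \<omega> c"
  have sub: "{x::'a. \<kappa> < norm x} \<subseteq> {x. c \<le> \<omega> x}"
  proof
    fix x :: 'a assume "x \<in> {x. \<kappa> < norm x}"
    then have "Inf S < norm x" unfolding \<kappa>_def k by simp
    then obtain s where s: "s \<in> S" "s < norm x" using cInf_less_iff[OF Sne bdd] by auto
    then have "c \<le> omega_inf \<omega> s" unfolding S_def by auto
    also have "\<dots> \<le> \<omega> x" using s by (intro oi_lower) auto
    finally show "x \<in> {x. c \<le> \<omega> x}" by simp
  qed
  have cl: "closed {x::'a. c \<le> \<omega> x}"
    by (intro closed_Collect_le continuous_on_const \<omega>_cont)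
  have "{x::'a. \<kappa> < norm x} = - cball 0 \<kappa>" by auto
  then have "closure {x::'a. \<kappa> < norm x} = - ball 0 \<kappa>" by (simp add: closure_complement)
  then have "- ball 0 \<kappa> \<subseteq> {x::'a. c \<le> \<omega> x}"
    using closure_minimal[OF sub cl] by simp
  then have "\<forall>x::'a. norm x \<ge> \<kappa> \<longrightarrow> c \<le> \<omega> x" by (auto simp: subset_iff)
  then show "omega_inf \<omega> (kappa \<omega> c) \<ge> c" unfolding \<kappa>_def by (intro oi_greatest) auto
qed

end



context VS begin

lemma global_part:
  fixes f \<omega> :: "'a \<Rightarrow> real"
  assumes fm[measurable]: "f \<in> borel_measurable borel" and M: "\<And>y. \<bar>f y\<bar> \<le> M"
    and \<omega>m[measurable]: "\<omega> \<in> borel_measurable borel" and \<omega>nn: "\<And>x. 0 \<le> \<omega> x" and Ot: "Ot > 0"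
    and Olow: "\<And>x. norm x \<ge> t \<Longrightarrow> Ot \<le> \<omega> x"
    and wp: "(\<integral>\<^sup>+ x. ennreal ((f x - muV_int V f)\<^sup>2 * \<omega> x) \<partial>muV V) \<le> ennreal (C0 * D)"
    and C0: "C0 \<ge> 0" and D: "D \<ge> 0"
  shows "(\<integral>x. indicator (- cball 0 t) x * (f x)\<^sup>2 \<partial>muV V) \<le> 2*(C0*D/Ot) + 2*(\<integral>x. \<bar>f x\<bar> \<partial>muV V)\<^sup>2"
proof -
  define m0 where "m0 = muV_int V f"
  define q where "q x = (f x - m0)\<^sup>2" for x
  define Bc where "Bc = - cball (0::'a) t"
  have [measurable]: "Bc \<in> sets borel" unfolding Bc_def by (simp add: borel_open)
  have M0: "M \<ge> 0" using M[of 0] by simp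
  have qb: "\<bar>q x\<bar> \<le> (M + \<bar>m0\<bar>)\<^sup>2" for x
  proof -
    have "\<bar>f x - m0\<bar> \<le> M + \<bar>m0\<bar>" using M[of x] by arith
    from power_mono[OF this abs_ge_zero, of 2] show ?thesis unfolding q_def by simp
  qed
  have q0: "q x \<ge> 0" for x unfolding q_def by simp
  have iq: "integrable (muV V) (\<lambda>x. indicator Bc x * q x)"
  proof (rule integrable_mu_bdd[where B="(M + \<bar>m0\<bar>)\<^sup>2"])
    fix x show "\<bar>indicator Bc x * q x\<bar> \<le> (M + \<bar>m0\<bar>)\<^sup>2"
      using qb[of x] by (simp add: indicator_def)
  qed (simp add: q_def)
  have Q: "(\<integral>x. indicator Bc x * q x \<partial>muV V) \<le> C0*D/Ot"
  proof -
    have "ennreal (\<integral>x. indicator Bc x * q x \<partial>muV V) = (\<integral>\<^sup>+x. ennreal (indicator Bc x * q x) \<partial>muV V)"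
      by (rule nn_integral_eq_integral[OF iq, symmetric]) (auto simp: q0)
    also have "\<dots> \<le> (\<integral>\<^sup>+x. ennreal (q x * \<omega> x) * ennreal (1/Ot) \<partial>muV V)"
    proof (rule nn_integral_mono)
      fix x
      have "indicator Bc x * q x \<le> q x * \<omega> x * (1/Ot)"
      proof (cases "x \<in> Bc")
        case True
        then have "Ot \<le> \<omega> x" using Olow unfolding Bc_def by auto
        then have "1 \<le> \<omega> x / Ot" using Ot by simp
        then have "q x * 1 \<le> q x * (\<omega> x / Ot)" using q0 by (intro mult_left_mono) auto
        then show ?thesis using True by simp
      next
        case False
        then show ?thesis using q0[of x] \<omega>nn[of x] Ot by simp
      qed
      then show "ennreal (indicator Bc x * q x) \<le> ennreal (q x * \<omega> x) * ennreal (1/Ot)"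
        using Ot by (simp add: ennreal_mult''[symmetric] ennreal_leI)
    qed
    also have "\<dots> = (\<integral>\<^sup>+x. ennreal (q x * \<omega> x) \<partial>muV V) * ennreal (1/Ot)"
      by (rule nn_integral_multc) (simp add: q_def)
    also have "\<dots> \<le> ennreal (C0 * D) * ennreal (1/Ot)"
      using wp unfolding q_def m0_def by (intro mult_right_mono) auto
    also have "\<dots> = ennreal (C0*D/Ot)" using Ot by (simp add: ennreal_mult''[symmetric])
    finally show ?thesis using C0 D Ot by (simp add: ennreal_le_iff)
  qed
  have if2: "integrable (muV V) (\<lambda>x. indicator Bc x * (f x)\<^sup>2)"
  proof (rule integrable_mu_bdd[where B="M\<^sup>2"])
    fix x show "\<bar>indicator Bc x * (f x)\<^sup>2\<bar> \<le> M\<^sup>2"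
      using power_mono[OF M[of x] abs_ge_zero, of 2] by (simp add: indicator_def)
  qed simp
  have im: "integrable (muV V) (\<lambda>x. indicator Bc x * m0\<^sup>2)"
    by (rule integrable_mu_bdd[where B="m0\<^sup>2"]) (auto simp: indicator_def)
  have "(\<integral>x. indicator Bc x * (f x)\<^sup>2 \<partial>muV V) \<le> (\<integral>x. 2 * (indicator Bc x * q x) + 2 * (indicator Bc x * m0\<^sup>2) \<partial>muV V)"
  proof (rule integral_mono[OF if2])
    show "integrable (muV V) (\<lambda>x. 2 * (indicator Bc x * q x) + 2 * (indicator Bc x * m0\<^sup>2))"
      using iq im by simp
    fix x
    have "(f x)\<^sup>2 \<le> 2 * q x + 2 * m0\<^sup>2"
      unfolding q_def using sum_squares_ge_zero[of "f x - 2*m0" 0]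
      by (simp add: power2_eq_square algebra_simps)
    then show "indicator Bc x * (f x)\<^sup>2 \<le> 2 * (indicator Bc x * q x) + 2 * (indicator Bc x * m0\<^sup>2)"
      by (simp add: indicator_def)
  qed
  also have "\<dots> = 2 * (\<integral>x. indicator Bc x * q x \<partial>muV V) + 2 * (\<integral>x. indicator Bc x * m0\<^sup>2 \<partial>muV V)"
    using iq im by simp
  also have "(\<integral>x. indicator Bc x * m0\<^sup>2 \<partial>muV V) \<le> m0\<^sup>2"
    using mu_le_1[of Bc "m0\<^sup>2"] by simp
  also have "m0\<^sup>2 \<le> (\<integral>x. \<bar>f x\<bar> \<partial>muV V)\<^sup>2"
  proof -
    have "\<bar>m0\<bar> \<le> (\<integral>x. \<bar>f x\<bar> \<partial>muV V)" unfolding m0_def muV_int_def by (rule integral_abs_bound)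
    from power_mono[OF this abs_ge_zero, of 2] show ?thesis by simp
  qed
  finally show ?thesis using Q unfolding Bc_def by linarith
qed

end



lemma X_ge_H:
  fixes H h e :: real
  assumes hH: "h \<le> H" and h: "h > 0" and e: "e \<ge> 0"
  shows "H \<le> H powr (2 + e) * h powr (-1 - e)"
proof -
  have H: "H > 0" using hH h by simp
  have p1: "H powr (2+e) = H powr 2 * H powr e" by (rule powr_add)
  have p2: "h powr (-1 - e) = h powr (-1) * h powr (-e)" using powr_add[of h "-1" "-e"] by simp
  have "H powr 2 = H\<^sup>2" using H by (simp add: powr_numeral)
  moreover have "h powr (-1) = 1/h" using h by (simp add: powr_minus_divide)
  moreover have "h powr (-e) = 1 / h powr e" by (simp add: powr_minus_divide)
  moreover have "H powr e = (H/h) powr e * h powr e" using H h by (simp add: powr_divide)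
  ultimately have X: "H powr (2 + e) * h powr (-1 - e) = (H * (H/h)) * (H/h) powr e"
    unfolding p1 p2 using h H by (simp add: field_simps power2_eq_square)
  have q1: "(H/h) powr e \<ge> 1" using hH h e by (intro ge_one_powr_ge_zero) auto
  have q2: "H/h \<ge> 1" using hH h by simp
  have "H * 1 * 1 \<le> (H * (H/h)) * (H/h) powr e"
    using q1 q2 H h by (intro mult_mono) auto
  then show ?thesis unfolding X by simp
qed

context VS begin

definition Cst :: "real \<Rightarrow> real" where
  "Cst \<alpha> = Z * (2 * 4^DIM('a) / unit_ball_vol DIM('a)) *
      (1 + (2^(DIM('a)+1) / unit_ball_vol DIM('a)) powr (real DIM('a) / \<alpha>)) + 2 / exp (V 0)"

lemma Cst_pos: "Cst \<alpha> > 0"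
proof -
  have u: "unit_ball_vol (real DIM('a)) > 0" by (rule unit_ball_vol_pos) simp
  have k2: "2 * 4^DIM('a) / unit_ball_vol DIM('a) > 0" using u by simp
  have p: "1 + (2^(DIM('a)+1) / unit_ball_vol DIM('a)) powr (real DIM('a) / \<alpha>) > 0"
    by (simp add: add_pos_nonneg)
  have e: "2 / exp (V 0) > 0" by simp
  show ?thesis unfolding Cst_def
    by (intro add_pos_pos mult_pos_pos Z_pos k2 p e)
qed

lemma main_ineq:
  fixes f \<omega> :: "'a \<Rightarrow> real" and \<alpha> C0 r t s :: real
  assumes Cb: "Cb_inf f" and \<alpha>: "0 < \<alpha>" "\<alpha> < 2" and om: "OM \<omega>" and C0: "C0 > 0"
    and wp: "(\<integral>\<^sup>+ x. ennreal ((f x - muV_int V f)\<^sup>2 * \<omega> x) \<partial>muV V) \<le> ennreal (C0 * DaV \<alpha> V f)"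
    and t: "t > 1" and s: "s > 0" and cond: "2 * C0 / omega_inf \<omega> t + s \<le> r"
  shows "muV_int V (\<lambda>x. (f x)\<^sup>2) \<le> r * DaV \<alpha> V f +
     Cst \<alpha> * HV V t powr (2 + real DIM('a) / \<alpha>) * hV V t powr (-1 - real DIM('a) / \<alpha>)
       * (1 + s powr (- real DIM('a) / \<alpha>)) * (muV_int V (\<lambda>x. \<bar>f x\<bar>))\<^sup>2"
proof -
  interpret OM \<omega> by (rule om)
  define d where "d = DIM('a)"
  define e where "e = real d / \<alpha>"
  have e0: "e \<ge> 0" unfolding e_def using \<alpha> by simp
  define w where "w = unit_ball_vol (real d)"
  have w0: "w > 0" unfolding w_def by simp
  define c where "c = 2^(d+1) / w"
  have c0: "c > 0" unfolding c_def using w0 by simp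
  define k2 where "k2 = 2 * 4^d / w"
  have k20: "k2 > 0" unfolding k2_def using w0 by simp
  obtain M L where fML: "M \<ge> 0" "L \<ge> 0" "\<And>x. \<bar>f x\<bar> \<le> M" "\<And>x y. \<bar>f x - f y\<bar> \<le> L * norm (x - y)"
    and fc: "continuous_on UNIV f"
    using Cb_inf_props[OF Cb] by blast
  have fm[measurable]: "f \<in> borel_measurable borel" using fc by (rule borel_measurable_continuous_onI)
  have \<omega>m[measurable]: "\<omega> \<in> borel_measurable borel" using \<omega>_cont by (rule borel_measurable_continuous_onI)
  obtain K where K: "\<And>x. (\<integral>\<^sup>+y. ennreal ((f y - f x)\<^sup>2 / norm (y - x) powr (real DIM('a) + \<alpha>)) \<partial>lborel) \<le> ennreal K"
    using kernel_nn_bound[OF fML(3) fML(4) fML(2) \<alpha>] by blast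
  define K' where "K' = max K 0"
  define k where "k x y = (f y - f x)\<^sup>2 / norm (y - x) powr (real DIM('a) + \<alpha>)" for x y :: 'a
  define g where "g x = (\<integral>y. k x y \<partial>lborel)" for x
  have k0: "k x y \<ge> 0" for x y unfolding k_def by simp
  have km[measurable]: "(\<lambda>(x, y). k x y) \<in> borel_measurable (borel \<Otimes>\<^sub>M lborel)" unfolding k_def by measurable
  have km1[measurable]: "k x \<in> borel_measurable lborel" for x unfolding k_def by measurable
  have kint: "integrable lborel (k x)" for x
  proof (rule integrableI_bounded)
    have "(\<integral>\<^sup>+y. ennreal (norm (k x y)) \<partial>lborel) = (\<integral>\<^sup>+y. ennreal (k x y) \<partial>lborel)"
      using k0 by simp
    also have "\<dots> \<le> ennreal K" using K[of x] unfolding k_def .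
    also have "\<dots> < \<infinity>" by simp
    finally show "(\<integral>\<^sup>+y. ennreal (norm (k x y)) \<partial>lborel) < \<infinity>" .
  qed simp
  have g0: "g x \<ge> 0" for x unfolding g_def by (rule integral_nonneg_AE) (simp add: k0)
  have gb: "\<bar>g x\<bar> \<le> K'" for x
  proof -
    have "ennreal (g x) = (\<integral>\<^sup>+y. ennreal (k x y) \<partial>lborel)"
      unfolding g_def by (rule nn_integral_eq_integral[symmetric]) (auto simp: kint k0)
    also have "\<dots> \<le> ennreal K" using K[of x] unfolding k_def .
    also have "\<dots> \<le> ennreal K'" unfolding K'_def by (simp add: ennreal_leI)
    finally have "g x \<le> K'" by (simp add: ennreal_le_iff K'_def)
    then show ?thesis using g0[of x] by simp
  qed
  have gm[measurable]: "g \<in> borel_measurable borel" unfolding g_def by measurable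
  define D where "D = DaV \<alpha> V f"
  have D: "D = (\<integral>x. g x \<partial>muV V)" unfolding D_def DaV_def g_def k_def ..
  have D0: "D \<ge> 0" unfolding D by (rule integral_nonneg_AE) (simp add: g0)
  define m where "m = muV_int V (\<lambda>x. \<bar>f x\<bar>)"
  define h where "h = hV V t"
  define H where "H = HV V t"
  have t0: "t \<ge> 0" using t by simp
  have h0: "h > 0" unfolding h_def by (rule hV_pos[OF t0])
  have hH: "h \<le> H" unfolding h_def H_def by (rule hV_le_HV[OF t0])
  define X where "X = H powr (2 + e) * h powr (-1 - e) * (1 + s powr (- e))"
  define Ot where "Ot = omega_inf \<omega> t"
  have Ot0: "Ot > 0" unfolding Ot_def by (rule oi_pos)
  obtain \<epsilon> where \<epsilon>: "0 < \<epsilon>" "\<epsilon> \<le> 1" "c * \<epsilon> powr \<alpha> * (H/h) \<le> s"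
      "1/\<epsilon>^d \<le> 1 + (c*H/(s*h)) powr (d/\<alpha>)"
    using eps_choice[OF c0 hH h0 s \<alpha>(1), of d] by blast
  have loc0: "(\<integral>x. indicator (cball 0 t) x * (f x)\<^sup>2 \<partial>muV V)
     \<le> c * \<epsilon> powr \<alpha> * (H / h) * D + k2 / \<epsilon>^d * (Z * H\<^sup>2 / h) * m\<^sup>2"
    using local_mu[OF fm fML(3) t \<epsilon>(1,2) \<alpha>(1), of K'] kint gm gb g0
    unfolding c_def k2_def w_def d_def H_def h_def D m_def muV_int_def g_def k_def by simp
  have l1: "c * \<epsilon> powr \<alpha> * (H / h) * D \<le> s * D" using \<epsilon>(3) D0 by (rule mult_right_mono)
  have l2: "k2 / \<epsilon>^d * (Z * H\<^sup>2 / h) * m\<^sup>2 \<le> (Z * k2 * (1 + c powr e)) * X * m\<^sup>2"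
  proof -
    have "k2 / \<epsilon>^d = k2 * (1/\<epsilon>^d)" by simp
    also have "\<dots> \<le> k2 * (1 + (c*H/(s*h)) powr e)" using \<epsilon>(4) k20 unfolding e_def by (intro mult_left_mono) auto
    finally have a: "k2 / \<epsilon>^d \<le> k2 * (1 + (c*H/(s*h)) powr e)" .
    have "k2 / \<epsilon>^d * (Z * H\<^sup>2 / h) \<le> k2 * (1 + (c*H/(s*h)) powr e) * (Z * H\<^sup>2 / h)"
      using a Z_pos h0 by (intro mult_right_mono) auto
    also have "\<dots> = (Z * k2) * (H\<^sup>2 / h) * (1 + (c*H/(s*h)) powr e)" by (simp add: field_simps)
    also have "\<dots> \<le> (Z * k2) * (1 + c powr e) * (H powr (2 + e) * h powr (-1 - e) * (1 + s powr (- e)))"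
      using Z_pos k20 by (intro const_simp[OF hH h0 s e0 c0]) simp
    finally show ?thesis unfolding X_def by (intro mult_right_mono) (auto simp: mult.assoc)
  qed
  have glob: "(\<integral>x. indicator (- cball 0 t) x * (f x)\<^sup>2 \<partial>muV V) \<le> 2*(C0*D/Ot) + 2*m\<^sup>2"
    unfolding m_def muV_int_def
    by (rule global_part[OF fm fML(3) \<omega>m _ Ot0 _ _ _ D0]) (use \<omega>_pos wp C0 in \<open>auto simp: Ot_def D_def intro: less_imp_le oi_lower\<close>)
  have split: "muV_int V (\<lambda>x. (f x)\<^sup>2) = (\<integral>x. indicator (cball 0 t) x * (f x)\<^sup>2 \<partial>muV V) + (\<integral>x. indicator (- cball 0 t) x * (f x)\<^sup>2 \<partial>muV V)"
  proof -
    have f2: "\<bar>(f x)\<^sup>2\<bar> \<le> M\<^sup>2" for x using power_mono[OF fML(3)[of x] abs_ge_zero, of 2] by simp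
    have i1: "integrable (muV V) (\<lambda>x. indicator (cball 0 t) x * (f x)\<^sup>2)"
      by (rule integrable_mu_bdd[where B="M\<^sup>2"]) (use f2 in \<open>auto simp: indicator_def\<close>)
    have i2: "integrable (muV V) (\<lambda>x. indicator (- cball 0 t) x * (f x)\<^sup>2)"
      by (rule integrable_mu_bdd[where B="M\<^sup>2"]) (use f2 in \<open>auto simp: indicator_def borel_open\<close>)
    have "muV_int V (\<lambda>x. (f x)\<^sup>2) = (\<integral>x. indicator (cball 0 t) x * (f x)\<^sup>2 + indicator (- cball 0 t) x * (f x)\<^sup>2 \<partial>muV V)"
      unfolding muV_int_def by (rule Bochner_Integration.integral_cong) (auto simp: indicator_def)
    also have "\<dots> = (\<integral>x. indicator (cball 0 t) x * (f x)\<^sup>2 \<partial>muV V) + (\<integral>x. indicator (- cball 0 t) x * (f x)\<^sup>2 \<partial>muV V)"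
      using i1 i2 by simp
    finally show ?thesis .
  qed
  have XH: "exp (V 0) \<le> X"
  proof -
    have "exp (V 0) \<le> H" unfolding H_def by (rule HV_ge0[OF t0])
    also have "H \<le> H powr (2 + e) * h powr (-1 - e)" by (rule X_ge_H[OF hH h0 e0])
    also have "\<dots> \<le> X"
    proof -
      have "H powr (2 + e) * h powr (-1 - e) * 1 \<le> H powr (2 + e) * h powr (-1 - e) * (1 + s powr (- e))"
        by (intro mult_left_mono) auto
      then show ?thesis unfolding X_def by simp
    qed
    finally show ?thesis .
  qed
  have two: "2 * m\<^sup>2 \<le> (2 / exp (V 0)) * X * m\<^sup>2"
  proof -
    have "2 \<le> (2 / exp (V 0)) * X" using XH by (simp add: field_simps)
    then show ?thesis by (intro mult_right_mono) auto
  qed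
  have rD: "(s + 2 * C0 / Ot) * D \<le> r * D" using cond D0 unfolding Ot_def by (intro mult_right_mono) auto
  have Cst_eq: "Cst \<alpha> = Z * k2 * (1 + c powr e) + 2 / exp (V 0)"
    unfolding Cst_def k2_def c_def e_def w_def d_def ..
  have "muV_int V (\<lambda>x. (f x)\<^sup>2) \<le> s * D + (Z * k2 * (1 + c powr e)) * X * m\<^sup>2 + (2*(C0*D/Ot) + 2*m\<^sup>2)"
    using split loc0 l1 l2 glob by linarith
  also have "\<dots> \<le> r * D + Cst \<alpha> * X * m\<^sup>2"
    using rD two unfolding Cst_eq by (simp add: algebra_simps)
  finally have fin: "muV_int V (\<lambda>x. (f x)\<^sup>2) \<le> r * D + Cst \<alpha> * X * m\<^sup>2" .
  have "- real DIM('a) / \<alpha> = - e" unfolding e_def d_def by simp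
  then show ?thesis using fin unfolding X_def D_def m_def H_def h_def e_def d_def by (simp add: mult.assoc)
qed

end



theorem proposition1p6:
  fixes V :: "'a::euclidean_space \<Rightarrow> real" and \<omega> :: "'a \<Rightarrow> real"
    and \<alpha> C0 :: real
  assumes V_meas: "V \<in> borel_measurable borel"
    and V_locbdd: "\<And>K. compact K \<Longrightarrow> bounded (V ` K)"
    and expV_bdd: "bounded (range (\<lambda>x. exp (- V x)))"
    and expV_int: "integrable lborel (\<lambda>x. exp (- V x))"
    and \<alpha>: "0 < \<alpha>" "\<alpha> < 2"
    and \<omega>_pos: "\<And>x. \<omega> x > 0"
    and \<omega>_cont: "continuous_on UNIV \<omega>"
    and \<omega>_lim: "filterlim \<omega> at_top at_infinity"
    and C0: "C0 > 0"
    and weighted_poincare: "\<And>f. Cb_inf f \<Longrightarrow>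
        (\<integral>\<^sup>+ x. ennreal ((f x - muV_int V f)\<^sup>2 * \<omega> x) \<partial>muV V) \<le> ennreal (C0 * DaV \<alpha> V f)"
  shows "\<exists>C1>0.
     (\<forall>r>0. \<forall>f. Cb_inf f \<longrightarrow>
        muV_int V (\<lambda>x. (f x)\<^sup>2) \<le> r * DaV \<alpha> V f + beta_fun \<alpha> V \<omega> C0 C1 r * (muV_int V (\<lambda>x. \<bar>f x\<bar>))\<^sup>2)
   \<and> (\<exists>r0>0. \<exists>C2>0. \<forall>r. 0 < r \<and> r \<le> r0 \<longrightarrow>
        beta_fun \<alpha> V \<omega> C0 C1 r \<le> C2 * (1 + r powr (- real DIM('a) / \<alpha>)
          * hV V (kappa \<omega> (4 * C0 / r)) powr (-1 - real DIM('a) / \<alpha>)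
          * HV V (kappa \<omega> (4 * C0 / r)) powr (2 + real DIM('a) / \<alpha>)))"
proof -
  interpret VS V by (unfold_locales) (fact V_meas V_locbdd expV_bdd expV_int)+
  have om: "OM \<omega>" by unfold_locales (fact \<omega>_pos \<omega>_cont \<omega>_lim)+
  interpret OM \<omega> by (rule om)
  define C1 where "C1 = Cst \<alpha>"
  have C1: "C1 > 0" unfolding C1_def by (rule Cst_pos)
  define e where "e = real DIM('a) / \<alpha>"
  have e0: "e \<ge> 0" unfolding e_def using \<alpha> by simp
  have me: "- real DIM('a) / \<alpha> = - e" unfolding e_def by simp
  define S where "S r = {C1 * HV V t powr (2 + real DIM('a) / \<alpha>) * hV V t powr (-1 - real DIM('a) / \<alpha>)
          * (1 + s powr (- real DIM('a) / \<alpha>)) | t s.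
       2 * C0 / omega_inf \<omega> t + s \<le> r \<and> t > 1 \<and> s > 0}" for r
  have beta: "beta_fun \<alpha> V \<omega> C0 C1 r = Inf (S r)" for r unfolding beta_fun_def S_def ..
  have S0: "y \<ge> 0" if "y \<in> S r" for y r
    using that C1 unfolding S_def by (auto intro!: mult_nonneg_nonneg add_nonneg_nonneg)
  have bdd: "bdd_below (S r)" for r using S0 by (intro bdd_belowI[where m=0]) blast
  have Sne: "S r \<noteq> {}" if r: "r > 0" for r
  proof -
    obtain R where R: "R > 0" "\<forall>x. norm x \<ge> R \<longrightarrow> 4 * C0 / r \<le> \<omega> x" using big_R by blast
    define t where "t = max R 2"
    have "4 * C0 / r \<le> omega_inf \<omega> t" using R unfolding t_def by (intro oi_greatest) auto
    moreover have "4 * C0 / r > 0" using C0 r by simp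
    ultimately have "2 * C0 / omega_inf \<omega> t \<le> r / 2" using C0 r oi_pos[of t] by (simp add: field_simps)
    then have "2 * C0 / omega_inf \<omega> t + r/2 \<le> r \<and> t > 1 \<and> r/2 > 0" using r unfolding t_def by auto
    then show ?thesis unfolding S_def by blast
  qed
  have part1: "\<forall>r>0. \<forall>f. Cb_inf f \<longrightarrow>
        muV_int V (\<lambda>x. (f x)\<^sup>2) \<le> r * DaV \<alpha> V f + beta_fun \<alpha> V \<omega> C0 C1 r * (muV_int V (\<lambda>x. \<bar>f x\<bar>))\<^sup>2"
  proof (intro allI impI)
    fix r :: real and f :: "'a \<Rightarrow> real" assume r: "r > 0" and Cb: "Cb_inf f"
    define LHS where "LHS = muV_int V (\<lambda>x. (f x)\<^sup>2)"
    define D where "D = DaV \<alpha> V f"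
    define m2 where "m2 = (muV_int V (\<lambda>x. \<bar>f x\<bar>))\<^sup>2"
    have m20: "m2 \<ge> 0" unfolding m2_def by simp
    have each: "LHS \<le> r * D + y * m2" if "y \<in> S r" for y
    proof -
      from that obtain t s where ts: "y = C1 * HV V t powr (2 + real DIM('a) / \<alpha>) * hV V t powr (-1 - real DIM('a) / \<alpha>)
          * (1 + s powr (- real DIM('a) / \<alpha>))" "2 * C0 / omega_inf \<omega> t + s \<le> r" "t > 1" "s > 0"
        unfolding S_def by blast
      show ?thesis
        using main_ineq[OF Cb \<alpha> om C0 weighted_poincare[OF Cb] ts(3) ts(4) ts(2)]
        unfolding ts(1) LHS_def D_def m2_def C1_def by simp
    qed
    obtain y0 where y0: "y0 \<in> S r" using Sne[OF r] by blast
    show "muV_int V (\<lambda>x. (f x)\<^sup>2) \<le> r * DaV \<alpha> V f + beta_fun \<alpha> V \<omega> C0 C1 r * (muV_int V (\<lambda>x. \<bar>f x\<bar>))\<^sup>2"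
      unfolding LHS_def[symmetric] D_def[symmetric] m2_def[symmetric] beta
    proof (cases "m2 = 0")
      case True
      then show "LHS \<le> r * D + Inf (S r) * m2" using each[OF y0] by simp
    next
      case False
      then have m2p: "m2 > 0" using m20 by simp
      have "(LHS - r * D) / m2 \<le> Inf (S r)"
      proof (rule cInf_greatest[OF Sne[OF r]])
        fix y assume "y \<in> S r"
        then show "(LHS - r * D) / m2 \<le> y" using each[of y] m2p by (simp add: field_simps)
      qed
      then show "LHS \<le> r * D + Inf (S r) * m2" using m2p by (simp add: field_simps)
    qed
  qed
  have part2: "\<exists>r0>0. \<exists>C2>0. \<forall>r. 0 < r \<and> r \<le> r0 \<longrightarrow>
        beta_fun \<alpha> V \<omega> C0 C1 r \<le> C2 * (1 + r powr (- real DIM('a) / \<alpha>)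
          * hV V (kappa \<omega> (4 * C0 / r)) powr (-1 - real DIM('a) / \<alpha>)
          * HV V (kappa \<omega> (4 * C0 / r)) powr (2 + real DIM('a) / \<alpha>))"
  proof -
    define O1 where "O1 = omega_inf \<omega> 1"
    have O1: "O1 > 0" unfolding O1_def by (rule oi_pos)
    define r0 where "r0 = 4 * C0 / (O1 + 1)"
    have r0: "r0 > 0" unfolding r0_def using C0 O1 by simp
    define C2 where "C2 = C1 * (r0 powr e + 2 powr e)"
    have C2: "C2 > 0" unfolding C2_def using C1 by (intro mult_pos_pos add_nonneg_pos) auto
    have "\<forall>r. 0 < r \<and> r \<le> r0 \<longrightarrow>
        beta_fun \<alpha> V \<omega> C0 C1 r \<le> C2 * (1 + r powr (- real DIM('a) / \<alpha>)
          * hV V (kappa \<omega> (4 * C0 / r)) powr (-1 - real DIM('a) / \<alpha>)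
          * HV V (kappa \<omega> (4 * C0 / r)) powr (2 + real DIM('a) / \<alpha>))"
    proof (intro allI impI)
      fix r :: real assume rr: "0 < r \<and> r \<le> r0"
      then have r: "r > 0" "r \<le> r0" by auto
      define cc where "cc = 4 * C0 / r"
      define \<kappa> where "\<kappa> = kappa \<omega> cc"
      have ccp: "cc > 0" unfolding cc_def using C0 r by simp
      have cc1: "cc \<ge> O1 + 1"
      proof -
        have "4 * C0 / r0 \<le> 4 * C0 / r" using r C0 by (intro divide_left_mono) auto
        also have "4 * C0 / r0 = O1 + 1" unfolding r0_def using C0 O1 by simp
        finally show ?thesis unfolding cc_def .
      qed
      have Ok: "omega_inf \<omega> \<kappa> \<ge> cc" unfolding \<kappa>_def by (rule kappa_prop(2))
      have k1: "\<kappa> > 1"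
      proof (rule ccontr)
        assume "\<not> \<kappa> > 1"
        then have "omega_inf \<omega> \<kappa> \<le> O1" unfolding O1_def by (intro oi_mono) simp
        with Ok cc1 show False by simp
      qed
      have cond: "2 * C0 / omega_inf \<omega> \<kappa> + r/2 \<le> r"
      proof -
        have "2 * C0 / omega_inf \<omega> \<kappa> \<le> 2 * C0 / cc" using Ok ccp C0 by (intro divide_left_mono) auto
        also have "2 * C0 / cc = r / 2" unfolding cc_def using C0 r by (simp add: field_simps)
        finally show ?thesis by simp
      qed
      define P where "P = HV V \<kappa> powr (2 + real DIM('a) / \<alpha>) * hV V \<kappa> powr (-1 - real DIM('a) / \<alpha>)"
      have P0: "P \<ge> 0" unfolding P_def by simp
      have elem: "C1 * P * (1 + (r/2) powr (- e)) \<in> S r"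
        unfolding S_def P_def me
        apply (simp only: mem_Collect_eq)
        apply (rule exI[of _ \<kappa>])
        apply (rule exI[of _ "r/2"])
        using cond k1 r by auto
      have "beta_fun \<alpha> V \<omega> C0 C1 r \<le> C1 * P * (1 + (r/2) powr (- e))"
        unfolding beta by (rule cInf_lower[OF elem bdd])
      also have "\<dots> = C1 * P + C1 * (2 powr e) * (r powr (- e) * P)"
      proof -
        have "(r/2) powr (- e) = 2 powr e * r powr (- e)"
          using r by (simp add: powr_divide powr_minus_divide)
        then show ?thesis by (simp add: algebra_simps)
      qed
      also have "C1 * P \<le> C1 * (r0 powr e) * (r powr (- e) * P)"
      proof -
        have "r0 powr (-e) \<le> r powr (- e)" using r e0 by (intro powr_mono2') auto
        then have "1 \<le> r0 powr e * r powr (- e)"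
          using r0 by (simp add: powr_minus_divide field_simps)
        then have "1 * P \<le> (r0 powr e * r powr (- e)) * P" using P0 by (intro mult_right_mono) auto
        then show ?thesis using C1 by (simp add: mult_left_mono mult.assoc)
      qed
      finally have "beta_fun \<alpha> V \<omega> C0 C1 r \<le> C2 * (r powr (- e) * P)"
        unfolding C2_def by (simp add: algebra_simps)
      also have "\<dots> \<le> C2 * (1 + r powr (- e) * P)" using C2 by simp
      finally show "beta_fun \<alpha> V \<omega> C0 C1 r \<le> C2 * (1 + r powr (- real DIM('a) / \<alpha>)
          * hV V (kappa \<omega> (4 * C0 / r)) powr (-1 - real DIM('a) / \<alpha>)
          * HV V (kappa \<omega> (4 * C0 / r)) powr (2 + real DIM('a) / \<alpha>))"
        unfolding me P_def \<kappa>_def cc_def by (simp add: mult_ac)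
    qed
    then show ?thesis using r0 C2 by blast
  qed
  show ?thesis using C1 part1 part2 by blast
qed


end
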